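(* Consider a Pandora's box problem with sequential inspection. Let $(\mathcal{C},\mathcal{P},y)$ be any state in which stopping is not an optimal action, and suppose that some partially opened box $k\in\mathcal{P}$, with revealed type $t_k$, has conditional F-threshold $\sigma_k^{F\mid t_k}$ equal to the largest opening threshold in that state, i.e. $$\sigma_k^{F\mid t_k}=\max\Big\{\max_{j\in\mathcal{C}}\max\{\sigma_j^F,\sigma_j^P\},\ \max_{j\in\mathcal{P}}\sigma_j^{F\mid t_j}\Big\}.$$ Then there exists an optimal policy that F-opens box $k$ at that state.
   Context: Pandora's box problem with sequential inspection: there are $N$ independent boxes. Box $i$ has a type $T_i$ taking values in a finite set $\Gamma_i$ and a nonnegative prize $V_i$, with a known joint distribution of $(V_i,T_i)$; different boxes are independent. A closed box $i$ can be F-opened (fully opened) at cost $c_i^F$, which reveals $V_i$, or P-opened (partially opened) at cost $c_i^P$, which reveals only $T_i$; a partially opened box can later be F-opened at an additional cost $c_i^F$. At any time the decision maker may stop and collect the largest prize among the F-opened boxes (or the initial value $y$). The objective is to maximize the expected collected prize minus the total inspection costs. A state is $(\mathcal{C},\mathcal{P},y)$ where $\mathcal{C}$ is the set of closed boxes, $\mathcal{P}$ is the set of partially opened boxes together with their revealed types $t_j$, and $y$ is the largest prize found so far. Thresholds: $\sigma_i^F$ solves $\mathbb{E}[(V_i-\sigma)^+]=c_i^F$; the conditional F-threshold $\sigma_i^{F\mid t}$ solves $\mathbb{E}[(V_i-\sigma)^+\mid T_i=t]=c_i^F$; the P-threshold $\sigma_i^P$ solves $\mathbb{E}\big[\max\{0,-c_i^F+\mathbb{E}[(V_i-\sigma)^+\mid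 T_i]\}\big]=c_i^P$. The opening thresholds of a state are $\sigma_j^F,\sigma_j^P$ for closed boxes $j\in\mathcal{C}$ and $\sigma_j^{F\mid t_j}$ for partially opened boxes $j\in\mathcal{P}$. *)

theory Defs
  imports "HOL-Probability.Probability"
begin

text \<open>Box i has a joint law M i of (V_i, T_i) on real x 't, where the type set
  is a finite type 't (each Gamma_i is a subset of it). Costs cF i, cP i.\<close>

definition condE :: "(real \<times> 't) measure \<Rightarrow> 't \<Rightarrow> (real \<Rightarrow> real) \<Rightarrow> real" where
  "condE M t f =
     (\<integral>\<omega>. f (fst \<omega>) * indicator {\<omega>. snd \<omega> = t} \<omega> \<partial>M) / measure M {\<omega> \<in> space M. snd \<omega> = t}"

definition sigmaF :: "(real \<times> 't) measure \<Rightarrow> real \<Rightarrow> real" where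
  "sigmaF M c = (THE \<sigma>. (\<integral>\<omega>. max 0 (fst \<omega> - \<sigma>) \<partial>M) = c)"

definition sigmaFcond :: "(real \<times> 't) measure \<Rightarrow> real \<Rightarrow> 't \<Rightarrow> real" where
  "sigmaFcond M c t = (THE \<sigma>. condE M t (\<lambda>v. max 0 (v - \<sigma>)) = c)"

definition sigmaP :: "(real \<times> 't) measure \<Rightarrow> real \<Rightarrow> real \<Rightarrow> real" where
  "sigmaP M cF cP = (THE \<sigma>.
     (\<integral>\<omega>. max 0 (- cF + condE M (snd \<omega>) (\<lambda>v. max 0 (v - \<sigma>))) \<partial>M) = cP)"

text \<open>Finite-horizon value iteration with fuel n; with fuel at least
  2|C| + |P| it is the optimal value (extra fuel is harmless, since with no
  boxes left the only option is stopping).\<close>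

primrec W :: "(nat \<Rightarrow> (real \<times> 't) measure) \<Rightarrow> (nat \<Rightarrow> real) \<Rightarrow> (nat \<Rightarrow> real)
    \<Rightarrow> nat \<Rightarrow> nat set \<Rightarrow> (nat \<rightharpoonup> 't) \<Rightarrow> real \<Rightarrow> real" where
  "W M cF cP 0 C P y = y"
| "W M cF cP (Suc n) C P y = Max ({y}
     \<union> (\<lambda>j. - cF j + (\<integral>\<omega>. W M cF cP n (C - {j}) P (max y (fst \<omega>)) \<partial>M j)) ` C
     \<union> (\<lambda>j. - cP j + (\<integral>\<omega>. W M cF cP n (C - {j}) (P(j \<mapsto> snd \<omega>)) y \<partial>M j)) ` C
     \<union> (\<lambda>j. - cF j + condE (M j) (the (P j))
            (\<lambda>v. W M cF cP n C (P(j := None)) (max y v))) ` dom P)"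

definition optval :: "(nat \<Rightarrow> (real \<times> 't) measure) \<Rightarrow> (nat \<Rightarrow> real) \<Rightarrow> (nat \<Rightarrow> real)
    \<Rightarrow> nat set \<Rightarrow> (nat \<rightharpoonup> 't) \<Rightarrow> real \<Rightarrow> real" where
  "optval M cF cP C P y = W M cF cP (2 * card C + card (dom P)) C P y"

definition QFpartial :: "(nat \<Rightarrow> (real \<times> 't) measure) \<Rightarrow> (nat \<Rightarrow> real) \<Rightarrow> (nat \<Rightarrow> real)
    \<Rightarrow> nat set \<Rightarrow> (nat \<rightharpoonup> 't) \<Rightarrow> real \<Rightarrow> nat \<Rightarrow> real" where
  "QFpartial M cF cP C P y k =
     - cF k + condE (M k) (the (P k)) (\<lambda>v. optval M cF cP C (P(k := None)) (max y v))"

definition max_threshold :: "(nat \<Rightarrow> (real \<times> 't) measure) \<Rightarrow> (nat \<Rightarrow> real) \<Rightarrow> (nat \<Rightarrow> real)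
    \<Rightarrow> nat set \<Rightarrow> (nat \<rightharpoonup> 't) \<Rightarrow> real" where
  "max_threshold M cF cP C P = Max ((\<lambda>j. sigmaF (M j) (cF j)) ` C
      \<union> (\<lambda>j. sigmaP (M j) (cF j) (cP j)) ` C
      \<union> (\<lambda>j. sigmaFcond (M j) (cF j) (the (P j))) ` dom P)"

end

theory Submission
  imports Defs
begin

lemma root_unique:
  fixes f :: "real \<Rightarrow> real"
  assumes lip: "\<And>x y. \<bar>f x - f y\<bar> \<le> \<bar>x - y\<bar>"
    and lo: "f a \<ge> c" and hi: "f b \<le> c" and c: "c > 0"
    and strict: "\<And>x y. x < y \<Longrightarrow> f y > 0 \<Longrightarrow> f x > f y"
  shows "f (THE s. f s = c) = c"
proof -
  have cont: "continuous_on S f" for S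
    by (rule lipschitz_on_continuous_on[of 1]) (rule lipschitz_onI, auto simp: dist_real_def lip)
  have ex: "\<exists>x. f x = c"
  proof (cases "a \<le> b")
    case True
    then show ?thesis using IVT2'[of f b c a, OF hi lo True cont] by auto
  next
    case False
    then show ?thesis using IVT'[of f b c a, OF hi lo _ cont] by auto
  qed
  have un: "x = y" if "f x = c" "f y = c" for x y
  proof (rule ccontr)
    assume "x \<noteq> y"
    then consider "x < y" | "y < x" by linarith
    then show False
      by cases (use strict[of x y] strict[of y x] that c in auto)
  qed
  from ex un have "\<exists>!s. f s = c" by blast
  then show ?thesis by (rule theI')
qed

locale box = prob_space A for A :: "(real \<times> 't::finite) measure" +
  assumes sets_A: "sets A = sets (borel \<Otimes>\<^sub>M count_space UNIV)"
    and int_fst: "integrable A fst"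
begin

lemma space_A: "space A = UNIV"
  using sets_eq_imp_space_eq[OF sets_A] by (simp add: space_pair_measure)

lemma fst_meas[measurable]: "fst \<in> borel_measurable A"
  unfolding measurable_cong_sets[OF sets_A refl] by (rule measurable_fst)

lemma snd_meas[measurable]: "snd \<in> measurable A (count_space UNIV)"
  unfolding measurable_cong_sets[OF sets_A refl] by (rule measurable_snd)

lemma ev_sets[measurable]: "{\<omega>. snd \<omega> = t} \<in> sets A"
proof -
  have "{\<omega>. snd \<omega> = t} = snd -` {t} \<inter> space A" by (auto simp: space_A)
  also have "\<dots> \<in> sets A" by (rule measurable_sets[OF snd_meas]) auto
  finally show ?thesis .
qed

lemma ind_meas[measurable]: "(\<lambda>\<omega>. indicator {\<omega>. snd \<omega> = t} \<omega> :: real) \<in> borel_measurable A"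
  by (rule borel_measurable_indicator[OF ev_sets])

lemma snd_fun_meas[measurable]: "(\<lambda>\<omega>. \<phi> (snd \<omega>) :: real) \<in> borel_measurable A"
  by (rule measurable_compose[OF snd_meas]) simp

definition pr :: "'t \<Rightarrow> real" where "pr t = measure A {\<omega> \<in> space A. snd \<omega> = t}"

lemma pr_nonneg: "pr t \<ge> 0" by (simp add: pr_def)

lemma int_snd_fun: "integrable A (\<lambda>\<omega>. \<phi> (snd \<omega>) :: real)"
proof (rule integrable_const_bound[where B="Max (range (\<lambda>t. \<bar>\<phi> t\<bar>))"])
  show "AE x in A. norm (\<phi> (snd x)) \<le> Max (range (\<lambda>t. \<bar>\<phi> t\<bar>))"
    by (auto intro!: Max_ge)
qed simp

lemma integral_snd_sum: "(\<integral>\<omega>. \<phi> (snd \<omega>) \<partial>A) = (\<Sum>t\<in>UNIV. \<phi> t * pr t)"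
proof -
  have "(\<integral>\<omega>. \<phi> (snd \<omega>) \<partial>A) = (\<integral>\<omega>. (\<Sum>t\<in>UNIV. \<phi> t * indicator {\<omega>. snd \<omega> = t} \<omega>) \<partial>A)"
  proof (rule Bochner_Integration.integral_cong[OF refl])
    fix \<omega> :: "real \<times> 't"
    have "(\<Sum>t\<in>UNIV. \<phi> t * indicator {\<omega>. snd \<omega> = t} \<omega>) = (\<Sum>t\<in>{snd \<omega>}. \<phi> t * indicator {\<omega>. snd \<omega> = t} \<omega>)"
      by (rule sum.mono_neutral_right) auto
    then show "\<phi> (snd \<omega>) = (\<Sum>t\<in>UNIV. \<phi> t * indicator {\<omega>. snd \<omega> = t} \<omega>)" by simp
  qed
  also have "\<dots> = (\<Sum>t\<in>UNIV. \<integral>\<omega>. \<phi> t * indicator {\<omega>. snd \<omega> = t} \<omega> \<partial>A)"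
    by (subst Bochner_Integration.integral_sum) (auto intro!: integrable_real_mult_indicator simp: emeasure_eq_measure)
  also have "\<dots> = (\<Sum>t\<in>UNIV. \<phi> t * pr t)"
    by (simp add: pr_def space_A)
  finally show ?thesis .
qed

lemma sum_pr: "(\<Sum>t\<in>UNIV. pr t) = 1"
  using integral_snd_sum[of "\<lambda>_. 1"] by (simp add: prob_space)


definition cint :: "'t \<Rightarrow> (real \<Rightarrow> real) \<Rightarrow> bool" where
  "cint t f \<longleftrightarrow> integrable A (\<lambda>\<omega>. f (fst \<omega>) * indicator {\<omega>. snd \<omega> = t} \<omega>)"

lemma condE_alt: "condE A t f = (\<integral>\<omega>. f (fst \<omega>) * indicator {\<omega>. snd \<omega> = t} \<omega> \<partial>A) / pr t"
  by (simp add: condE_def pr_def)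

lemma int_fun_bound:
  assumes f: "f \<in> borel_measurable borel" and b: "\<And>x. \<bar>f x\<bar> \<le> c + \<bar>x\<bar>"
  shows "integrable A (\<lambda>\<omega>. f (fst \<omega>))"
proof (rule Bochner_Integration.integrable_bound[where f="\<lambda>\<omega>::real\<times>'t. \<bar>c\<bar> + \<bar>fst \<omega>\<bar>"])
  show "integrable A (\<lambda>\<omega>. \<bar>c\<bar> + \<bar>fst \<omega>\<bar>)" using int_fst by auto
  show "(\<lambda>\<omega>. f (fst \<omega>)) \<in> borel_measurable A" by (rule measurable_compose[OF fst_meas f])
  show "AE x in A. norm (f (fst x)) \<le> norm (\<bar>c\<bar> + \<bar>fst x\<bar>)"
  proof (rule AE_I2)
    fix x :: "real \<times> 't"
    have "\<bar>f (fst x)\<bar> \<le> \<bar>c\<bar> + \<bar>fst x\<bar>" using b[of "fst x"] abs_ge_self[of c] by linarith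
    then show "norm (f (fst x)) \<le> norm (\<bar>c\<bar> + \<bar>fst x\<bar>)" by simp
  qed
qed

lemma cint_I: "integrable A (\<lambda>\<omega>. f (fst \<omega>)) \<Longrightarrow> cint t f"
  unfolding cint_def by (rule integrable_real_mult_indicator[OF ev_sets])

lemma cint_const: "cint t (\<lambda>_. c)"
  by (rule cint_I) simp

lemma cint_id: "cint t (\<lambda>x. x)"
  by (rule cint_I) (simp add: int_fst)

lemma condE_mono:
  assumes "cint t f" "cint t g" "\<And>x. f x \<le> g x"
  shows "condE A t f \<le> condE A t g"
  unfolding condE_alt using assms unfolding cint_def
  by (intro divide_right_mono integral_mono) (auto simp: pr_nonneg indicator_def)

lemma condE_add:
  assumes "cint t f" "cint t g"
  shows "condE A t (\<lambda>x. f x + g x) = condE A t f + condE A t g"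
proof -
  have "(\<integral>\<omega>. (f (fst \<omega>) + g (fst \<omega>)) * indicator {\<omega>. snd \<omega> = t} \<omega> \<partial>A)
      = (\<integral>\<omega>. f (fst \<omega>) * indicator {\<omega>. snd \<omega> = t} \<omega> \<partial>A) + (\<integral>\<omega>. g (fst \<omega>) * indicator {\<omega>. snd \<omega> = t} \<omega> \<partial>A)"
    unfolding distrib_right using assms unfolding cint_def by (rule Bochner_Integration.integral_add)
  then show ?thesis unfolding condE_alt by (simp add: add_divide_distrib)
qed

lemma pr_ind: "(\<integral>\<omega>. indicator {\<omega>. snd \<omega> = t} \<omega> \<partial>A) = pr t"
  by (simp add: pr_def space_A)

lemma condE_const: "pr t > 0 \<Longrightarrow> condE A t (\<lambda>_. c) = c"
  unfolding condE_alt by (simp add: pr_def space_A)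

lemma condE_zero: "pr t = 0 \<Longrightarrow> condE A t f = 0"
  by (simp add: condE_alt)

lemma condE_cmult: "condE A t (\<lambda>x. c * f x) = c * condE A t f"
  unfolding condE_alt by (simp add: mult.assoc)

lemma condE_add_const:
  assumes "pr t > 0" "cint t f"
  shows "condE A t (\<lambda>x. f x + c) = condE A t f + c"
  using condE_add[OF assms(2) cint_const[of t c]] condE_const[OF assms(1)] by simp

lemma condE_sum:
  assumes "finite I" "\<And>i. i \<in> I \<Longrightarrow> cint t (F i)"
  shows "condE A t (\<lambda>x. \<Sum>i\<in>I. F i x) = (\<Sum>i\<in>I. condE A t (F i))"
proof -
  have "(\<integral>\<omega>. (\<Sum>i\<in>I. F i (fst \<omega>)) * indicator {\<omega>. snd \<omega> = t} \<omega> \<partial>A)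
      = (\<integral>\<omega>. (\<Sum>i\<in>I. F i (fst \<omega>) * indicator {\<omega>. snd \<omega> = t} \<omega>) \<partial>A)"
    by (simp add: sum_distrib_right)
  also have "\<dots> = (\<Sum>i\<in>I. (\<integral>\<omega>. F i (fst \<omega>) * indicator {\<omega>. snd \<omega> = t} \<omega> \<partial>A))"
    using assms(2) unfolding cint_def by (subst Bochner_Integration.integral_sum) auto
  finally show ?thesis unfolding condE_alt by (simp add: sum_divide_distrib)
qed

definition num :: "(real \<times> 't \<Rightarrow> real) \<Rightarrow> real \<Rightarrow> real" where
  "num w s = (\<integral>\<omega>. max 0 (fst \<omega> - s) * w \<omega> \<partial>A)"

context
  fixes w :: "real \<times> 't \<Rightarrow> real"
  assumes w_meas[measurable]: "w \<in> borel_measurable A"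
    and w_nn: "\<And>\<omega>. 0 \<le> w \<omega>" and w_le: "\<And>\<omega>. w \<omega> \<le> 1"
begin

lemma num_int: "integrable A (\<lambda>\<omega>. max 0 (fst \<omega> - s) * w \<omega>)"
proof (rule Bochner_Integration.integrable_bound[where f="\<lambda>\<omega>::real\<times>'t. \<bar>s\<bar> + \<bar>fst \<omega>\<bar>"])
  show "integrable A (\<lambda>\<omega>. \<bar>s\<bar> + \<bar>fst \<omega>\<bar>)" using int_fst by auto
  show "(\<lambda>\<omega>. max 0 (fst \<omega> - s) * w \<omega>) \<in> borel_measurable A" by measurable
  have "\<bar>max 0 (fst x - s) * w x\<bar> \<le> \<bar>s\<bar> + \<bar>fst x\<bar>" for x :: "real \<times> 't"
  proof -
    have "\<bar>max 0 (fst x - s) * w x\<bar> = max 0 (fst x - s) * w x" using w_nn[of x] by simp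
    also have "\<dots> \<le> max 0 (fst x - s) * 1" by (rule mult_left_mono[OF w_le]) simp
    also have "\<dots> \<le> \<bar>s\<bar> + \<bar>fst x\<bar>" by simp
    finally show ?thesis .
  qed
  then show "AE x in A. norm (max 0 (fst x - s) * w x) \<le> norm (\<bar>s\<bar> + \<bar>fst x\<bar>)" by simp
qed

lemma int_w: "integrable A w"
  by (rule integrable_const_bound[where B=1]) (auto simp: w_nn w_le)

lemma num_nonneg: "0 \<le> num w s"
  unfolding num_def by (rule Bochner_Integration.integral_nonneg) (simp add: w_nn)

lemma num_anti: "s \<le> s' \<Longrightarrow> num w s' \<le> num w s"
  unfolding num_def by (intro integral_mono num_int mult_right_mono) (auto simp: w_nn)

lemma num_lip: "s \<le> s' \<Longrightarrow> num w s \<le> num w s' + (s' - s) * (\<integral>\<omega>. w \<omega> \<partial>A)"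
proof -
  assume ss: "s \<le> s'"
  have "num w s \<le> (\<integral>\<omega>. max 0 (fst \<omega> - s') * w \<omega> + (s' - s) * w \<omega> \<partial>A)"
    unfolding num_def
  proof (intro integral_mono num_int Bochner_Integration.integrable_add integrable_mult_right int_w)
    fix x :: "real \<times> 't"
    have "max 0 (fst x - s) \<le> max 0 (fst x - s') + (s' - s)" using ss by simp
    then have "max 0 (fst x - s) * w x \<le> (max 0 (fst x - s') + (s' - s)) * w x"
      by (rule mult_right_mono) (simp add: w_nn)
    then show "max 0 (fst x - s) * w x \<le> max 0 (fst x - s') * w x + (s' - s) * w x"
      by (simp add: distrib_right)
  qed
  also have "\<dots> = num w s' + (s' - s) * (\<integral>\<omega>. w \<omega> \<partial>A)"
    unfolding num_def by (subst Bochner_Integration.integral_add) (auto intro: num_int int_w)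
  finally show ?thesis .
qed

lemma num_tendsto: "((\<lambda>s. num w s) \<longlongrightarrow> 0) at_top"
proof -
  have "((\<lambda>s. \<integral>\<omega>. max 0 (fst \<omega> - s) * w \<omega> \<partial>A) \<longlongrightarrow> (\<integral>\<omega>. 0 \<partial>A)) at_top"
  proof (rule integral_dominated_convergence_at_top[where w="\<lambda>\<omega>::real\<times>'t. \<bar>fst \<omega>\<bar>"])
    show "AE x in A. ((\<lambda>i. max 0 (fst x - i) * w x) \<longlongrightarrow> 0) at_top"
    proof (rule AE_I2)
      fix x
      have "eventually (\<lambda>i. max 0 (fst x - i) * w x = 0) at_top"
        using eventually_gt_at_top[of "fst x"] by eventually_elim simp
      then show "((\<lambda>i. max 0 (fst x - i) * w x) \<longlongrightarrow> 0) at_top" by (rule tendsto_eventually)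
    qed
    show "\<forall>\<^sub>F i in at_top. AE x in A. norm (max 0 (fst x - i) * w x) \<le> \<bar>fst x\<bar>"
      using eventually_ge_at_top[of "0::real"]
    proof eventually_elim
      case (elim i)
      show ?case
      proof (rule AE_I2)
        fix x
        have "\<bar>max 0 (fst x - i) * w x\<bar> = max 0 (fst x - i) * w x" using w_nn[of x] by simp
        also have "\<dots> \<le> max 0 (fst x - i) * 1" by (rule mult_left_mono[OF w_le]) simp
        also have "\<dots> \<le> \<bar>fst x\<bar>" using elim by simp
        finally show "norm (max 0 (fst x - i) * w x) \<le> \<bar>fst x\<bar>" by simp
      qed
    qed
  qed (auto simp: int_fst)
  then show ?thesis by (simp add: num_def)
qed

lemma num_strict:
  assumes "s1 < s2" "num w s2 > 0"
  shows "num w s1 > num w s2"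
proof (rule ccontr)
  assume "\<not> num w s1 > num w s2"
  then have le: "num w s1 - num w s2 \<le> 0" by simp
  define D where "D \<omega> = min (s2 - s1) (max 0 (fst \<omega> - s2)) * w \<omega>" for \<omega>
  have D_nn: "0 \<le> D \<omega>" for \<omega> unfolding D_def using assms(1) by (simp add: w_nn)
  have D_le: "D \<omega> \<le> max 0 (fst \<omega> - s1) * w \<omega> - max 0 (fst \<omega> - s2) * w \<omega>" for \<omega>
  proof -
    have "min (s2 - s1) (max 0 (fst \<omega> - s2)) \<le> max 0 (fst \<omega> - s1) - max 0 (fst \<omega> - s2)"
      using assms(1) by (auto simp: min_def max_def)
    then show ?thesis unfolding D_def left_diff_distrib[symmetric] by (rule mult_right_mono) (simp add: w_nn)
  qed
  have D_int: "integrable A D"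
  proof (rule Bochner_Integration.integrable_bound[OF num_int[of s1]])
    show "D \<in> borel_measurable A" unfolding D_def by measurable
    show "AE x in A. norm (D x) \<le> norm (max 0 (fst x - s1) * w x)"
    proof (rule AE_I2)
      fix x
      have "D x \<le> max 0 (fst x - s1) * w x"
        using D_le[of x] by (smt (verit) mult_nonneg_nonneg w_nn max.cobounded1)
      then show "norm (D x) \<le> norm (max 0 (fst x - s1) * w x)" using D_nn[of x] by simp
    qed
  qed
  have "integral\<^sup>L A D \<le> num w s1 - num w s2"
    unfolding num_def
    by (subst Bochner_Integration.integral_diff[symmetric]) (auto intro!: integral_mono D_int num_int Bochner_Integration.integrable_diff D_le)
  moreover have "integral\<^sup>L A D \<ge> 0" by (rule Bochner_Integration.integral_nonneg) (simp add: D_nn)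
  ultimately have "integral\<^sup>L A D = 0" using le by simp
  then have "AE x in A. D x = 0" using integral_nonneg_eq_0_iff_AE[OF D_int] D_nn by simp
  then have "AE x in A. max 0 (fst x - s2) * w x = 0"
  proof (rule eventually_mono)
    fix x assume "D x = 0"
    then show "max 0 (fst x - s2) * w x = 0" using assms(1) unfolding D_def
      by (auto simp: min_def split: if_splits)
  qed
  then have "num w s2 = 0" unfolding num_def by (rule integral_eq_zero_AE)
  then show False using assms(2) by simp
qed

end

lemma w_one: "(\<lambda>_. 1::real) \<in> borel_measurable A" "\<And>\<omega>::real\<times>'t. 0 \<le> (1::real)" "\<And>\<omega>::real\<times>'t. (1::real) \<le> 1"
  by auto

lemma w_ind: "(\<lambda>\<omega>. indicator {\<omega>. snd \<omega> = t} \<omega> :: real) \<in> borel_measurable A"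
   "\<And>\<omega>. 0 \<le> (indicator {\<omega>. snd \<omega> = t} \<omega> :: real)" "\<And>\<omega>. (indicator {\<omega>. snd \<omega> = t} \<omega> :: real) \<le> 1"
  by (auto simp: indicator_def)


lemma sigmaF_eq:
  assumes c: "c > 0"
  shows "(\<integral>\<omega>. max 0 (fst \<omega> - sigmaF A c) \<partial>A) = c"
proof -
  define f where "f s = (\<integral>\<omega>. max 0 (fst \<omega> - s) \<partial>A)" for s
  have fn: "f s = num (\<lambda>_. 1) s" for s by (simp add: f_def num_def)
  note W = w_one
  have lip: "\<bar>f x - f y\<bar> \<le> \<bar>x - y\<bar>" for x y
  proof -
    have *: "f a \<le> f b + (b - a) \<and> f b \<le> f a" if "a \<le> b" for a b
      using num_lip[OF W that] num_anti[OF W that] unfolding fn by (simp add: prob_space)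
    show ?thesis using *[of x y] *[of y x] by (cases "x \<le> y") auto
  qed
  have lo: "f ((\<integral>\<omega>. fst \<omega> \<partial>A) - c) \<ge> c"
  proof -
    have "(\<integral>\<omega>. fst \<omega> - ((\<integral>\<omega>. fst \<omega> \<partial>A) - c) \<partial>A) \<le> f ((\<integral>\<omega>. fst \<omega> \<partial>A) - c)"
      unfolding f_def using num_int[OF W] int_fst by (intro integral_mono) auto
    then show ?thesis using int_fst by (simp add: prob_space)
  qed
  have "eventually (\<lambda>s. f s < c) at_top"
    using order_tendstoD(2)[OF num_tendsto[OF W] c] unfolding fn .
  then obtain b where hi: "f b \<le> c" by (auto simp: eventually_at_top_linorder dest: less_imp_le)
  have strict: "f x > f y" if "x < y" "f y > 0" for x y
    using num_strict[OF W that[unfolded fn]] unfolding fn .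
  have "f (THE s. f s = c) = c" by (rule root_unique[OF lip lo hi c strict])
  then show ?thesis unfolding sigmaF_def f_def .
qed

definition g :: "'t \<Rightarrow> real \<Rightarrow> real" where
  "g t s = condE A t (\<lambda>v. max 0 (v - s))"

lemma g_num: "g t s = num (\<lambda>\<omega>. indicator {\<omega>. snd \<omega> = t} \<omega>) s / pr t"
  by (simp add: g_def condE_alt num_def)

lemma g_anti: "x \<le> y \<Longrightarrow> g t y \<le> g t x"
  unfolding g_num by (intro divide_right_mono num_anti[OF w_ind] pr_nonneg)

lemma g_lip: "x \<le> y \<Longrightarrow> g t x \<le> g t y + (y - x)"
proof -
  assume xy: "x \<le> y"
  show ?thesis
  proof (cases "pr t = 0")
    case True then show ?thesis using xy by (simp add: g_num)
  next
    case False
    then have p: "pr t > 0" using pr_nonneg[of t] by simp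
    have "num (\<lambda>\<omega>. indicator {\<omega>. snd \<omega> = t} \<omega>) x \<le> num (\<lambda>\<omega>. indicator {\<omega>. snd \<omega> = t} \<omega>) y + (y - x) * pr t"
      using num_lip[OF w_ind xy] by (simp add: pr_def space_A)
    then show ?thesis using p unfolding g_num by (simp add: field_simps)
  qed
qed

lemma g_abs: "\<bar>g t x - g t y\<bar> \<le> \<bar>x - y\<bar>"
  using g_lip[of x y t] g_lip[of y x t] g_anti[of x y t] g_anti[of y x t] by (cases "x \<le> y") auto

lemma g_nonneg: "0 \<le> g t s"
  unfolding g_num by (intro divide_nonneg_nonneg num_nonneg[OF w_ind] pr_nonneg)

lemma g_strict: "pr t > 0 \<Longrightarrow> x < y \<Longrightarrow> g t y > 0 \<Longrightarrow> g t x > g t y"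
  unfolding g_num
  by (intro divide_strict_right_mono num_strict[OF w_ind]) (auto simp: zero_less_divide_iff)

lemma g_lower: "pr t > 0 \<Longrightarrow> g t s \<ge> condE A t (\<lambda>v. v) - s"
proof -
  assume p: "pr t > 0"
  have "condE A t (\<lambda>v. v + (- s)) \<le> g t s" unfolding g_def
    by (rule condE_mono) (auto intro: cint_I int_fun_bound[where c="\<bar>s\<bar>"] simp: int_fst)
  then show ?thesis using condE_add_const[OF p cint_id, of "- s"] by simp
qed

lemma g_eventually: "e > 0 \<Longrightarrow> eventually (\<lambda>s. g t s < e) at_top"
proof (cases "pr t = 0")
  case True
  assume "e > 0" then show ?thesis using True by (simp add: g_num)
next
  case False
  assume e: "e > 0"
  then have p: "pr t > 0" using pr_nonneg[of t] False by simp
  have "((\<lambda>s. g t s) \<longlongrightarrow> 0 / pr t) at_top"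
    unfolding g_num by (intro tendsto_divide num_tendsto[OF w_ind] tendsto_const) (use p in auto)
  then show ?thesis using order_tendstoD(2)[of _ 0 _ e] e by simp
qed

lemma sigmaFcond_eq:
  assumes c: "c > 0" and p: "pr t > 0"
  shows "condE A t (\<lambda>v. max 0 (v - sigmaFcond A c t)) = c"
proof -
  have lip: "\<bar>g t x - g t y\<bar> \<le> \<bar>x - y\<bar>" for x y by (rule g_abs)
  have lo: "g t (condE A t (\<lambda>v. v) - c) \<ge> c" using g_lower[OF p, of "condE A t (\<lambda>v. v) - c"] by simp
  obtain b where hi: "g t b \<le> c"
    using g_eventually[OF c, of t] by (auto simp: eventually_at_top_linorder dest: less_imp_le)
  have strict: "g t x > g t y" if "x < y" "g t y > 0" for x y by (rule g_strict[OF p that])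
  have "g t (THE s. g t s = c) = c" by (rule root_unique[OF lip lo hi c strict])
  then show ?thesis unfolding sigmaFcond_def g_def .
qed

lemma h_sum: "(\<integral>\<omega>. max 0 (- cF + condE A (snd \<omega>) (\<lambda>v. max 0 (v - s))) \<partial>A)
   = (\<Sum>t\<in>UNIV. max 0 (- cF + g t s) * pr t)"
  using integral_snd_sum[of "\<lambda>t. max 0 (- cF + g t s)"] by (simp add: g_def)

lemma h_anti: "x \<le> y \<Longrightarrow> (\<integral>\<omega>. max 0 (- cF + condE A (snd \<omega>) (\<lambda>v. max 0 (v - y))) \<partial>A)
   \<le> (\<integral>\<omega>. max 0 (- cF + condE A (snd \<omega>) (\<lambda>v. max 0 (v - x))) \<partial>A)"
proof -
  assume xy: "x \<le> y"
  have "max 0 (- cF + g t y) * pr t \<le> max 0 (- cF + g t x) * pr t" for t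
    using g_anti[OF xy, of t] by (intro mult_right_mono pr_nonneg) simp
  then show ?thesis unfolding h_sum by (intro sum_mono)
qed

lemma sigmaP_eq:
  assumes cF: "cF > 0" and cP: "cP > 0"
  shows "(\<integral>\<omega>. max 0 (- cF + condE A (snd \<omega>) (\<lambda>v. max 0 (v - sigmaP A cF cP))) \<partial>A) = cP"
proof -
  define f where "f s = (\<integral>\<omega>. max 0 (- cF + condE A (snd \<omega>) (\<lambda>v. max 0 (v - s))) \<partial>A)" for s
  have fs: "f s = (\<Sum>t\<in>UNIV. max 0 (- cF + g t s) * pr t)" for s unfolding f_def by (rule h_sum)
  have lip: "\<bar>f x - f y\<bar> \<le> \<bar>x - y\<bar>" for x y
  proof -
    have "\<bar>f x - f y\<bar> = \<bar>\<Sum>t\<in>UNIV. (max 0 (- cF + g t x) - max 0 (- cF + g t y)) * pr t\<bar>"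
      unfolding fs by (simp add: sum_subtractf left_diff_distrib)
    also have "\<dots> \<le> (\<Sum>t\<in>UNIV. \<bar>(max 0 (- cF + g t x) - max 0 (- cF + g t y)) * pr t\<bar>)"
      by (rule sum_abs)
    also have "\<dots> \<le> (\<Sum>t\<in>UNIV. \<bar>x - y\<bar> * pr t)"
    proof (rule sum_mono)
      fix t
      have "\<bar>max 0 (- cF + g t x) - max 0 (- cF + g t y)\<bar> \<le> \<bar>x - y\<bar>"
        using g_abs[of t x y] by (smt (verit))
      then show "\<bar>(max 0 (- cF + g t x) - max 0 (- cF + g t y)) * pr t\<bar> \<le> \<bar>x - y\<bar> * pr t"
        using pr_nonneg[of t] by (simp add: abs_mult mult_right_mono)
    qed
    also have "\<dots> = \<bar>x - y\<bar>" by (simp add: sum_distrib_left[symmetric] sum_pr)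
    finally show ?thesis .
  qed
  obtain t0 where p0: "pr t0 > 0"
  proof -
    have "\<exists>t. pr t > 0"
    proof (rule ccontr)
      assume "\<not> ?thesis"
      then have "\<And>t. pr t = 0" using pr_nonneg by (simp add: not_less order.antisym)
      then show False using sum_pr by simp
    qed
    then show ?thesis using that by blast
  qed
  define a where "a = - cF + condE A t0 (\<lambda>v. v) - cP / pr t0"
  have lo: "f a \<ge> cP"
  proof -
    have "max 0 (- cF + g t0 a) * pr t0 \<le> (\<Sum>t\<in>UNIV. max 0 (- cF + g t a) * pr t)"
      by (rule member_le_sum) (auto intro: mult_nonneg_nonneg pr_nonneg)
    moreover have "max 0 (- cF + g t0 a) \<ge> cP / pr t0"
      using g_lower[OF p0, of a] unfolding a_def by simp
    then have "max 0 (- cF + g t0 a) * pr t0 \<ge> cP / pr t0 * pr t0"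
      by (rule mult_right_mono) (use p0 in simp)
    ultimately show ?thesis unfolding fs using p0 by simp
  qed
  have "eventually (\<lambda>s. \<forall>t. g t s < cF) at_top"
    using g_eventually[OF cF] by (simp add: eventually_all_finite)
  then obtain b where b: "\<And>t. g t b < cF" by (auto simp: eventually_at_top_linorder)
  have "max 0 (- cF + g t b) * pr t = 0" for t using b[of t] by simp
  then have hi: "f b \<le> cP" unfolding fs using cP by (simp only: sum.neutral_const)
  have strict: "f x > f y" if xy: "x < y" and fy: "f y > 0" for x y
  proof -
    have "\<exists>t. max 0 (- cF + g t y) * pr t > 0"
    proof (rule ccontr)
      assume "\<not> ?thesis"
      then have "\<And>t. max 0 (- cF + g t y) * pr t \<le> 0" by (simp add: not_less)
      then have "f y \<le> 0" unfolding fs by (intro sum_nonpos) auto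
      then show False using fy by simp
    qed
    then obtain t1 where t1: "max 0 (- cF + g t1 y) * pr t1 > 0" by blast
    then have "0 < max 0 (- cF + g t1 y) \<and> 0 < pr t1"
      using pr_nonneg[of t1] by (auto simp: zero_less_mult_iff)
    then have p1: "pr t1 > 0" and gy: "g t1 y > cF" by (auto simp: less_max_iff_disj)
    have "g t1 x > g t1 y" by (rule g_strict[OF p1 xy]) (use gy cF in simp)
    then have "max 0 (- cF + g t1 y) * pr t1 < max 0 (- cF + g t1 x) * pr t1"
      using gy p1 by (intro mult_strict_right_mono) auto
    moreover have "max 0 (- cF + g t y) * pr t \<le> max 0 (- cF + g t x) * pr t" for t
      using g_anti[of x y t] xy by (intro mult_right_mono pr_nonneg) auto
    ultimately show ?thesis unfolding fs by (intro sum_strict_mono_ex1) auto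
  qed
  have "f (THE s. f s = cP) = cP" by (rule root_unique[OF lip lo hi cP strict])
  then show ?thesis unfolding sigmaP_def f_def .
qed
end


lemma abs_maxmin: "\<bar>max (max z x) (min y (s::real))\<bar> \<le> \<bar>z\<bar> + \<bar>s\<bar> + \<bar>x\<bar> + \<bar>y\<bar>"
  by (auto simp: max_def min_def abs_if)

lemma fubini_box:
  fixes A B :: "(real \<times> 't::finite) measure" and G :: "real \<Rightarrow> real"
  assumes A: "box A" and B: "box B"
    and G: "mono G" and Gb: "\<And>x. \<bar>G x\<bar> \<le> c + \<bar>x\<bar>"
    and w1[measurable]: "w1 \<in> borel_measurable A" and w1b: "\<And>a. 0 \<le> w1 a" "\<And>a. w1 a \<le> 1"
    and w2[measurable]: "w2 \<in> borel_measurable B" and w2b: "\<And>a. 0 \<le> w2 a" "\<And>a. w2 a \<le> 1"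
  shows "integrable A (\<lambda>a. (\<integral>b. G (max (max z (fst a)) (min (fst b) s)) * w2 b \<partial>B) * w1 a)"
    and "integrable B (\<lambda>b. (\<integral>a. G (max (max z (fst a)) (min (fst b) s)) * w1 a \<partial>A) * w2 b)"
    and "(\<integral>a. (\<integral>b. G (max (max z (fst a)) (min (fst b) s)) * w2 b \<partial>B) * w1 a \<partial>A)
       = (\<integral>b. (\<integral>a. G (max (max z (fst a)) (min (fst b) s)) * w1 a \<partial>A) * w2 b \<partial>B)"
proof -
  interpret A: box A by (rule A)
  interpret B: box B by (rule B)
  interpret P: pair_prob_space A B by unfold_locales
  have Gm[measurable]: "G \<in> borel_measurable borel" by (rule borel_measurable_mono[OF G])
  define K where "K = \<bar>c\<bar> + \<bar>z\<bar> + \<bar>s\<bar>"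
  define f where "f p = G (max (max z (fst (fst p))) (min (fst (snd p)) s)) * w1 (fst p) * w2 (snd p)" for p
  have fm[measurable]: "f \<in> borel_measurable (A \<Otimes>\<^sub>M B)" unfolding f_def by measurable
  have fb: "\<bar>f (a, b)\<bar> \<le> K + \<bar>fst a\<bar> + \<bar>fst b\<bar>" for a b
  proof -
    have "\<bar>f (a, b)\<bar> = \<bar>G (max (max z (fst a)) (min (fst b) s))\<bar> * w1 a * w2 b"
      unfolding f_def using w1b[of a] w2b[of b] by (simp add: abs_mult)
    also have "\<dots> \<le> \<bar>G (max (max z (fst a)) (min (fst b) s))\<bar> * 1 * 1"
      using w1b[of a] w2b[of b] by (intro mult_mono) auto
    also have "\<dots> \<le> c + \<bar>max (max z (fst a)) (min (fst b) s)\<bar>" using Gb by simp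
    also have "\<dots> \<le> K + \<bar>fst a\<bar> + \<bar>fst b\<bar>" unfolding K_def using abs_maxmin[of z "fst a" "fst b" s] abs_ge_self[of c] by linarith
    finally show ?thesis .
  qed
  have ib: "integrable B (\<lambda>b. f (a, b))" for a
  proof (rule Bochner_Integration.integrable_bound[where f="\<lambda>b::real\<times>'t. K + \<bar>fst a\<bar> + \<bar>fst b\<bar>"])
    show "integrable B (\<lambda>b. K + \<bar>fst a\<bar> + \<bar>fst b\<bar>)" by (simp add: B.int_fst)
    have "(\<lambda>b. f (a, b)) = (\<lambda>b. G (max (max z (fst a)) (min (fst b) s)) * w1 a * w2 b)"
      by (simp add: f_def)
    also have "\<dots> \<in> borel_measurable B" by measurable
    finally show "(\<lambda>b. f (a, b)) \<in> borel_measurable B" .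
    show "AE b in B. norm (f (a, b)) \<le> norm (K + \<bar>fst a\<bar> + \<bar>fst b\<bar>)"
      using fb[of a] by (intro AE_I2) (simp add: K_def)
  qed
  have int_prod: "integrable (A \<Otimes>\<^sub>M B) f"
  proof (rule P.Fubini_integrable[OF fm])
    show "AE x in A. integrable B (\<lambda>y. f (x, y))" using ib by simp
    show "integrable A (\<lambda>x. \<integral>y. norm (f (x, y)) \<partial>B)"
    proof (rule Bochner_Integration.integrable_bound[where f="\<lambda>a::real\<times>'t. K + (\<integral>b. \<bar>fst b\<bar> \<partial>B) + \<bar>fst a\<bar>"])
      show "integrable A (\<lambda>a. K + (\<integral>b. \<bar>fst b\<bar> \<partial>B) + \<bar>fst a\<bar>)" by (simp add: A.int_fst)
      show "(\<lambda>x. \<integral>y. norm (f (x, y)) \<partial>B) \<in> borel_measurable A"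
        by (rule B.borel_measurable_lebesgue_integral) measurable
      show "AE x in A. norm (\<integral>y. norm (f (x, y)) \<partial>B) \<le> norm (K + (\<integral>b. \<bar>fst b\<bar> \<partial>B) + \<bar>fst x\<bar>)"
      proof (rule AE_I2)
        fix a :: "real \<times> 't"
        have "(\<integral>y. norm (f (a, y)) \<partial>B) \<le> (\<integral>y. K + \<bar>fst a\<bar> + \<bar>fst y\<bar> \<partial>B)"
          using fb[of a] ib[of a] B.int_fst by (intro integral_mono) auto
        also have "\<dots> = K + \<bar>fst a\<bar> + (\<integral>b. \<bar>fst b\<bar> \<partial>B)"
          using B.int_fst by (simp add: B.prob_space)
        finally have "(\<integral>y. norm (f (a, y)) \<partial>B) \<le> K + (\<integral>b. \<bar>fst b\<bar> \<partial>B) + \<bar>fst a\<bar>" by simp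
        moreover have "0 \<le> (\<integral>y. norm (f (a, y)) \<partial>B)" by simp
        moreover have "0 \<le> K" by (simp add: K_def)
        moreover have "0 \<le> (\<integral>b. \<bar>fst b\<bar> \<partial>B)" by simp
        ultimately show "norm (\<integral>y. norm (f (a, y)) \<partial>B) \<le> norm (K + (\<integral>b. \<bar>fst b\<bar> \<partial>B) + \<bar>fst a\<bar>)"
          by simp
      qed
    qed
  qed
  have int_prod': "integrable (A \<Otimes>\<^sub>M B) (case_prod (\<lambda>a b. f (a, b)))" using int_prod by simp
  have e1: "(\<integral>b. f (a, b) \<partial>B) = (\<integral>b. G (max (max z (fst a)) (min (fst b) s)) * w2 b \<partial>B) * w1 a" for a
    unfolding f_def by (simp add: mult_ac)
  have e2: "(\<integral>a. f (a, b) \<partial>A) = (\<integral>a. G (max (max z (fst a)) (min (fst b) s)) * w1 a \<partial>A) * w2 b" for b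
  proof -
    have "(\<integral>a. f (a, b) \<partial>A) = (\<integral>a. w2 b * (G (max (max z (fst a)) (min (fst b) s)) * w1 a) \<partial>A)"
      unfolding f_def by (simp add: mult_ac)
    also have "\<dots> = w2 b * (\<integral>a. G (max (max z (fst a)) (min (fst b) s)) * w1 a \<partial>A)"
      by (rule integral_mult_right_zero)
    finally show ?thesis by (simp add: mult.commute)
  qed
  show "integrable A (\<lambda>a. (\<integral>b. G (max (max z (fst a)) (min (fst b) s)) * w2 b \<partial>B) * w1 a)"
    using P.integrable_fst[OF int_prod'] unfolding e1 .
  show "integrable B (\<lambda>b. (\<integral>a. G (max (max z (fst a)) (min (fst b) s)) * w1 a \<partial>A) * w2 b)"
    using P.integrable_snd[OF int_prod'] unfolding e2 .
  show "(\<integral>a. (\<integral>b. G (max (max z (fst a)) (min (fst b) s)) * w2 b \<partial>B) * w1 a \<partial>A)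
       = (\<integral>b. (\<integral>a. G (max (max z (fst a)) (min (fst b) s)) * w1 a \<partial>A) * w2 b \<partial>B)"
    using P.Fubini_integral[OF int_prod'] unfolding e1 e2 by simp
qed


definition LM :: "(real \<Rightarrow> real) \<Rightarrow> bool" where
  "LM G \<longleftrightarrow> mono G \<and> (\<forall>x y. x \<le> y \<longrightarrow> G y \<le> G x + (y - x))"

lemma LM_mono: "LM G \<Longrightarrow> x \<le> y \<Longrightarrow> G x \<le> G y"
  by (auto simp: LM_def mono_def)

lemma LM_lip: "LM G \<Longrightarrow> x \<le> y \<Longrightarrow> G y \<le> G x + (y - x)"
  by (auto simp: LM_def)

lemma LM_abs: "LM G \<Longrightarrow> \<bar>G x\<bar> \<le> \<bar>G 0\<bar> + \<bar>x\<bar>"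
proof -
  assume G: "LM G"
  show ?thesis
  proof (cases "0 \<le> x")
    case True
    then show ?thesis using LM_mono[OF G True] LM_lip[OF G True] by linarith
  next
    case False
    then have "x \<le> 0" by simp
    then show ?thesis using LM_mono[OF G \<open>x \<le> 0\<close>] LM_lip[OF G \<open>x \<le> 0\<close>] by linarith
  qed
qed

lemma LM_meas: "LM G \<Longrightarrow> G \<in> borel_measurable borel"
  by (rule borel_measurable_mono) (simp add: LM_def)

lemma mono_maxmin: "LM G \<Longrightarrow> mono (\<lambda>x. G (max z (min x s)))"
proof (rule monoI)
  fix x y :: real assume G: "LM G" and "x \<le> y"
  then have "max z (min x s) \<le> max z (min y s)" by (simp add: max_def min_def)
  then show "G (max z (min x s)) \<le> G (max z (min y s))" by (rule LM_mono[OF G])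
qed

lemma abs_max_le: "\<bar>max z x\<bar> \<le> \<bar>z\<bar> + \<bar>x::real\<bar>"
  by (auto simp: max_def abs_if)

lemma abs_maxmin_le: "\<bar>max z (min x s)\<bar> \<le> \<bar>z\<bar> + \<bar>s\<bar> + \<bar>x::real\<bar>"
  by (auto simp: max_def min_def abs_if)

lemma LM_id: "LM (\<lambda>x. x)"
  by (simp add: LM_def mono_def)

context box
begin

lemma int_LM: "LM G \<Longrightarrow> integrable A (\<lambda>\<omega>. G (max z (fst \<omega>)))"
proof -
  assume G: "LM G"
  have m: "(\<lambda>x. G (max z x)) \<in> borel_measurable borel"
    by (rule borel_measurable_mono) (auto simp: mono_def intro!: LM_mono[OF G])
  have "\<bar>G (max z x)\<bar> \<le> (\<bar>G 0\<bar> + \<bar>z\<bar>) + \<bar>x\<bar>" for x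
    using LM_abs[OF G, of "max z x"] abs_max_le[of z x] by linarith
  then show ?thesis by (rule int_fun_bound[OF m])
qed

lemma cint_LM: "LM G \<Longrightarrow> cint t (\<lambda>v. G (max z v))"
  by (rule cint_I) (rule int_LM)

lemma int_LM2: "LM G \<Longrightarrow> integrable A (\<lambda>\<omega>. G (max z (min (fst \<omega>) s)))"
proof -
  assume G: "LM G"
  have m: "(\<lambda>x. G (max z (min x s))) \<in> borel_measurable borel"
    by (rule borel_measurable_mono[OF mono_maxmin[OF G]])
  have "\<bar>G (max z (min x s))\<bar> \<le> (\<bar>G 0\<bar> + \<bar>z\<bar> + \<bar>s\<bar>) + \<bar>x\<bar>" for x
    using LM_abs[OF G, of "max z (min x s)"] abs_maxmin_le[of z x s] by linarith
  then show ?thesis by (rule int_fun_bound[OF m])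
qed

lemma cint_LM2: "LM G \<Longrightarrow> cint t (\<lambda>v. G (max z (min v s)))"
  by (rule cint_I) (rule int_LM2)

end

lemma Max_opts_le:
  fixes a a' d :: real
  assumes "finite C" "finite D" "a \<le> a' + d"
    and "\<And>j. j \<in> C \<Longrightarrow> f j \<le> f' j + d" "\<And>j. j \<in> C \<Longrightarrow> g j \<le> g' j + d"
    and "\<And>j. j \<in> D \<Longrightarrow> h j \<le> h' j + d"
  shows "Max ({a} \<union> f ` C \<union> g ` C \<union> h ` D) \<le> Max ({a'} \<union> f' ` C \<union> g' ` C \<union> h' ` D) + d"
proof -
  let ?S = "{a'} \<union> f' ` C \<union> g' ` C \<union> h' ` D"
  have fin: "finite ?S" using assms(1,2) by simp
  have ge: "x \<le> Max ?S" if "x \<in> ?S" for x using fin that by (rule Max_ge)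
  show ?thesis
  proof (rule Max.boundedI)
    show "finite ({a} \<union> f ` C \<union> g ` C \<union> h ` D)" using assms(1,2) by simp
    show "{a} \<union> f ` C \<union> g ` C \<union> h ` D \<noteq> {}" by simp
    fix x assume "x \<in> {a} \<union> f ` C \<union> g ` C \<union> h ` D"
    then consider "x = a" | j where "j \<in> C" "x = f j" | j where "j \<in> C" "x = g j"
      | j where "j \<in> D" "x = h j" by blast
    then show "x \<le> Max ?S + d"
    proof cases
      case 1 then show ?thesis using assms(3) ge[of a'] by simp
    next
      case (2 j) then show ?thesis using assms(4)[of j] ge[of "f' j"] by auto
    next
      case (3 j) then show ?thesis using assms(5)[of j] ge[of "g' j"] by auto
    next
      case (4 j) then show ?thesis using assms(6)[of j] ge[of "h' j"] by auto
    qed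
  qed
qed

locale pandora =
  fixes N :: nat and M :: "nat \<Rightarrow> (real \<times> 't::finite) measure" and cF cP :: "nat \<Rightarrow> real"
  assumes boxM: "\<And>i. i < N \<Longrightarrow> box (M i)"
    and cF_pos: "\<And>i. i < N \<Longrightarrow> 0 < cF i"
    and cP_pos: "\<And>i. i < N \<Longrightarrow> 0 < cP i"
begin

abbreviation V where "V \<equiv> optval M cF cP"
abbreviation WW where "WW \<equiv> W M cF cP"

definition good :: "nat set \<Rightarrow> (nat \<rightharpoonup> 't) \<Rightarrow> bool" where
  "good C P \<longleftrightarrow> C \<subseteq> {..<N} \<and> dom P \<subseteq> {..<N}"

lemma good_finite: "good C P \<Longrightarrow> finite C" "good C P \<Longrightarrow> finite (dom P)"
  by (auto simp: good_def intro: finite_subset)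

lemma good_C: "good C P \<Longrightarrow> j \<in> C \<Longrightarrow> j < N"
  and good_P: "good C P \<Longrightarrow> j \<in> dom P \<Longrightarrow> j < N"
  by (auto simp: good_def)

lemma good_sub1: "good C P \<Longrightarrow> good (C - {j}) P"
  and good_sub2: "good C P \<Longrightarrow> j \<in> C \<Longrightarrow> good (C - {j}) (P(j \<mapsto> t))"
  and good_sub3: "good C P \<Longrightarrow> good C (P(j := None))"
  by (auto simp: good_def)

definition opts :: "(nat set \<Rightarrow> (nat \<rightharpoonup> 't) \<Rightarrow> real \<Rightarrow> real) \<Rightarrow> nat set \<Rightarrow> (nat \<rightharpoonup> 't) \<Rightarrow> real \<Rightarrow> real set" where
  "opts F C P z = {z}
     \<union> (\<lambda>j. - cF j + (\<integral>\<omega>. F (C - {j}) P (max z (fst \<omega>)) \<partial>M j)) ` C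
     \<union> (\<lambda>j. - cP j + (\<integral>\<omega>. F (C - {j}) (P(j \<mapsto> snd \<omega>)) z \<partial>M j)) ` C
     \<union> (\<lambda>j. - cF j + condE (M j) (the (P j)) (\<lambda>v. F C (P(j := None)) (max z v))) ` dom P"

lemma W_Suc: "WW (Suc n) C P z = Max (opts (WW n) C P z)"
  by (simp add: opts_def)

lemma opts_cong:
  assumes "\<And>j x. j \<in> C \<Longrightarrow> F (C - {j}) P x = F' (C - {j}) P x"
    and "\<And>j t x. j \<in> C \<Longrightarrow> F (C - {j}) (P(j \<mapsto> t)) x = F' (C - {j}) (P(j \<mapsto> t)) x"
    and "\<And>j x. j \<in> dom P \<Longrightarrow> F C (P(j := None)) x = F' C (P(j := None)) x"
  shows "opts F C P z = opts F' C P z"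
proof -
  have 1: "(\<lambda>j. - cF j + (\<integral>\<omega>. F (C - {j}) P (max z (fst \<omega>)) \<partial>M j)) ` C
      = (\<lambda>j. - cF j + (\<integral>\<omega>. F' (C - {j}) P (max z (fst \<omega>)) \<partial>M j)) ` C"
    by (rule image_cong[OF refl]) (simp add: assms(1))
  have 2: "(\<lambda>j. - cP j + (\<integral>\<omega>. F (C - {j}) (P(j \<mapsto> snd \<omega>)) z \<partial>M j)) ` C
      = (\<lambda>j. - cP j + (\<integral>\<omega>. F' (C - {j}) (P(j \<mapsto> snd \<omega>)) z \<partial>M j)) ` C"
    by (rule image_cong[OF refl]) (simp add: assms(2))
  have 3: "(\<lambda>j. - cF j + condE (M j) (the (P j)) (\<lambda>v. F C (P(j := None)) (max z v))) ` dom P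
      = (\<lambda>j. - cF j + condE (M j) (the (P j)) (\<lambda>v. F' C (P(j := None)) (max z v))) ` dom P"
    by (rule image_cong[OF refl]) (simp add: assms(3))
  show ?thesis unfolding opts_def 1 2 3 ..
qed

lemma finite_opts: "finite C \<Longrightarrow> finite (dom P) \<Longrightarrow> finite (opts F C P z)"
  by (simp add: opts_def)

lemma W_fuel:
  assumes "finite C" "finite (dom P)" "2 * card C + card (dom P) \<le> n" "2 * card C + card (dom P) \<le> m"
  shows "WW n C P z = WW m C P z"
  using assms
proof (induction n arbitrary: m C P z)
  case 0
  then have e: "C = {}" "dom P = {}" by auto
  have "WW k C P z = z" for k using e by (cases k) (auto simp: opts_def)
  then show ?case by (simp del: W.simps)
next
  case (Suc n)
  show ?case
  proof (cases m)
    case 0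
    then have e: "C = {}" "dom P = {}" using Suc.prems by auto
    have "WW k C P z = z" for k using e by (cases k) (auto simp: opts_def)
    then show ?thesis by (simp del: W.simps)
  next
    case (Suc m')
    have "opts (WW n) C P z = opts (WW m') C P z"
    proof (rule opts_cong)
      fix j x assume j: "j \<in> C"
      have c: "card (C - {j}) = card C - 1" using j Suc.prems(1) by simp
      have "card C \<ge> 1" using j Suc.prems(1) by (metis One_nat_def Suc_leI card_gt_0_iff empty_iff)
      then show "WW n (C - {j}) P x = WW m' (C - {j}) P x"
        using Suc.prems \<open>m = Suc m'\<close> c by (intro Suc.IH) auto
    next
      fix j t x assume j: "j \<in> C"
      have c: "card (C - {j}) = card C - 1" using j Suc.prems(1) by simp
      have "card C \<ge> 1" using j Suc.prems(1) by (metis One_nat_def Suc_leI card_gt_0_iff empty_iff)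
      define P' where "P' = P(j \<mapsto> t)"
      have d: "card (dom P') \<le> card (dom P) + 1" "finite (dom P')"
        using Suc.prems(2) by (simp_all add: card_insert_if P'_def)
      have "WW n (C - {j}) P' x = WW m' (C - {j}) P' x"
        using Suc.prems \<open>m = Suc m'\<close> c d \<open>card C \<ge> 1\<close> by (intro Suc.IH) auto
      then show "WW n (C - {j}) (P(j \<mapsto> t)) x = WW m' (C - {j}) (P(j \<mapsto> t)) x" by (simp add: P'_def)
    next
      fix j x assume j: "j \<in> dom P"
      define P' where "P' = P(j := None)"
      have d: "card (dom P') = card (dom P) - 1" "finite (dom P')" using j Suc.prems(2) by (simp_all add: P'_def)
      have "card (dom P) \<ge> 1" using j Suc.prems(2) by (metis One_nat_def Suc_leI card_gt_0_iff empty_iff)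
      have "WW n C P' x = WW m' C P' x"
        using Suc.prems \<open>m = Suc m'\<close> d \<open>card (dom P) \<ge> 1\<close> by (intro Suc.IH) auto
      then show "WW n C (P(j := None)) x = WW m' C (P(j := None)) x" by (simp add: P'_def)
    qed
    then show ?thesis unfolding \<open>m = Suc m'\<close> W_Suc by simp
  qed
qed

lemma V_bellman:
  assumes "finite C" "finite (dom P)"
  shows "V C P z = Max (opts V C P z)"
proof (cases "2 * card C + card (dom P)")
  case 0
  then have e: "C = {}" "dom P = {}" using assms by auto
  then show ?thesis by (simp add: optval_def opts_def)
next
  case (Suc r)
  have "V C P z = WW (Suc r) C P z" unfolding optval_def Suc ..
  also have "\<dots> = Max (opts (WW r) C P z)" by (rule W_Suc)
  also have "opts (WW r) C P z = opts V C P z"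
  proof (rule opts_cong)
    fix j x assume j: "j \<in> C"
    have c: "card (C - {j}) = card C - 1" using j assms(1) by simp
    have "card C \<ge> 1" using j assms(1) by (metis One_nat_def Suc_leI card_gt_0_iff empty_iff)
    show "WW r (C - {j}) P x = V (C - {j}) P x"
      unfolding optval_def using assms c Suc \<open>card C \<ge> 1\<close> by (intro W_fuel) auto
  next
    fix j t x assume j: "j \<in> C"
    have c: "card (C - {j}) = card C - 1" using j assms(1) by simp
    have "card C \<ge> 1" using j assms(1) by (metis One_nat_def Suc_leI card_gt_0_iff empty_iff)
    define P' where "P' = P(j \<mapsto> t)"
    have d: "card (dom P') \<le> card (dom P) + 1" "finite (dom P')"
      using assms(2) by (simp_all add: card_insert_if P'_def)
    have "WW r (C - {j}) P' x = V (C - {j}) P' x"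
      unfolding optval_def using assms c d Suc \<open>card C \<ge> 1\<close> by (intro W_fuel) auto
    then show "WW r (C - {j}) (P(j \<mapsto> t)) x = V (C - {j}) (P(j \<mapsto> t)) x" by (simp add: P'_def)
  next
    fix j x assume j: "j \<in> dom P"
    define P' where "P' = P(j := None)"
    have d: "card (dom P') = card (dom P) - 1" "finite (dom P')" using j assms(2) by (simp_all add: P'_def)
    have "card (dom P) \<ge> 1" using j assms(2) by (metis One_nat_def Suc_leI card_gt_0_iff empty_iff)
    have "WW r C P' x = V C P' x"
      unfolding optval_def using assms d Suc \<open>card (dom P) \<ge> 1\<close> by (intro W_fuel) auto
    then show "WW r C (P(j := None)) x = V C (P(j := None)) x" by (simp add: P'_def)
  qed
  finally show ?thesis .
qed

end


context box
begin

lemma int_LM_mono: "LM G \<Longrightarrow> z \<le> z' \<Longrightarrow> (\<integral>\<omega>. G (max z (fst \<omega>)) \<partial>A) \<le> (\<integral>\<omega>. G (max z' (fst \<omega>)) \<partial>A)"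
proof -
  assume G: "LM G" and zz: "z \<le> z'"
  show ?thesis
  proof (rule integral_mono[OF int_LM[OF G] int_LM[OF G]])
    fix \<omega> :: "real \<times> 't"
    have "max z (fst \<omega>) \<le> max z' (fst \<omega>)" using zz by (simp add: max_def)
    then show "G (max z (fst \<omega>)) \<le> G (max z' (fst \<omega>))" by (rule LM_mono[OF G])
  qed
qed

lemma int_LM_lip: "LM G \<Longrightarrow> z \<le> z' \<Longrightarrow> (\<integral>\<omega>. G (max z' (fst \<omega>)) \<partial>A) \<le> (\<integral>\<omega>. G (max z (fst \<omega>)) \<partial>A) + (z' - z)"
proof -
  assume G: "LM G" and zz: "z \<le> z'"
  have "(\<integral>\<omega>. G (max z' (fst \<omega>)) \<partial>A) \<le> (\<integral>\<omega>. G (max z (fst \<omega>)) + (z' - z) \<partial>A)"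
  proof (intro integral_mono int_LM[OF G] Bochner_Integration.integrable_add integrable_const)
    fix \<omega> :: "real \<times> 't"
    have "G (max z' (fst \<omega>)) \<le> G (max z (fst \<omega>)) + (max z' (fst \<omega>) - max z (fst \<omega>))"
      using zz by (intro LM_lip[OF G]) simp
    also have "\<dots> \<le> G (max z (fst \<omega>)) + (z' - z)" using zz by (simp add: max_def)
    finally show "G (max z' (fst \<omega>)) \<le> G (max z (fst \<omega>)) + (z' - z)" .
  qed
  also have "\<dots> = (\<integral>\<omega>. G (max z (fst \<omega>)) \<partial>A) + (z' - z)"
    using int_LM[OF G] by (simp add: prob_space)
  finally show ?thesis .
qed

lemma int_snd_le:
  fixes \<Phi> \<Psi> :: "'t \<Rightarrow> real"
  assumes le: "\<And>t. \<Phi> t \<le> \<Psi> t + d"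
  shows "(\<integral>\<omega>. \<Phi> (snd \<omega>) \<partial>A) \<le> (\<integral>\<omega>. \<Psi> (snd \<omega>) \<partial>A) + d"
proof -
  have "(\<integral>\<omega>. \<Phi> (snd \<omega>) \<partial>A) \<le> (\<integral>\<omega>. \<Psi> (snd \<omega>) + d \<partial>A)"
    by (intro integral_mono int_snd_fun[of \<Phi>]) (auto intro: le int_snd_fun[of "\<lambda>t. \<Psi> t + d"])
  also have "\<dots> = (\<integral>\<omega>. \<Psi> (snd \<omega>) \<partial>A) + d"
    using int_snd_fun[of \<Psi>] by (simp add: prob_space)
  finally show ?thesis .
qed

lemma condE_LM_mono: "LM G \<Longrightarrow> z \<le> z' \<Longrightarrow> condE A t (\<lambda>v. G (max z v)) \<le> condE A t (\<lambda>v. G (max z' v))"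
proof -
  assume G: "LM G" and zz: "z \<le> z'"
  show ?thesis
  proof (rule condE_mono[OF cint_LM[OF G] cint_LM[OF G]])
    fix v :: real
    have "max z v \<le> max z' v" using zz by (simp add: max_def)
    then show "G (max z v) \<le> G (max z' v)" by (rule LM_mono[OF G])
  qed
qed

lemma condE_LM_lip: "LM G \<Longrightarrow> z \<le> z' \<Longrightarrow> condE A t (\<lambda>v. G (max z' v)) \<le> condE A t (\<lambda>v. G (max z v)) + (z' - z)"
proof (cases "pr t = 0")
  case True
  assume "z \<le> z'" then show ?thesis using True by (simp add: condE_zero)
next
  case False
  assume G: "LM G" and zz: "z \<le> z'"
  have p: "pr t > 0" using False pr_nonneg[of t] by simp
  have "condE A t (\<lambda>v. G (max z' v)) \<le> condE A t (\<lambda>v. G (max z v) + (z' - z))"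
  proof (rule condE_mono[OF cint_LM[OF G]])
    show "cint t (\<lambda>v. G (max z v) + (z' - z))"
      by (rule cint_I) (simp add: int_LM[OF G])
    fix v
    have "G (max z' v) \<le> G (max z v) + (max z' v - max z v)"
      using zz by (intro LM_lip[OF G]) simp
    also have "\<dots> \<le> G (max z v) + (z' - z)" using zz by (simp add: max_def)
    finally show "G (max z' v) \<le> G (max z v) + (z' - z)" .
  qed
  also have "\<dots> = condE A t (\<lambda>v. G (max z v)) + (z' - z)"
    by (rule condE_add_const[OF p cint_LM[OF G]])
  finally show ?thesis .
qed

end

context pandora
begin

lemma W_LM: "good C P \<Longrightarrow> LM (WW n C P) \<and> (\<forall>z. z \<le> WW n C P z)"
proof (induction n arbitrary: C P)
  case 0
  have "WW 0 C P = (\<lambda>x. x)" by (rule ext) simp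
  then show ?case by (simp add: LM_id)
next
  case (Suc n)
  let ?F = "WW n"
  have fin: "finite C" "finite (dom P)" using good_finite[OF Suc.prems] by auto
  have IH1: "LM (?F (C - {j}) P)" if "j \<in> C" for j
    using Suc.IH[OF good_sub1[OF Suc.prems]] by blast
  have IH2: "LM (?F (C - {j}) (P(j \<mapsto> t)))" if "j \<in> C" for j t
    using Suc.IH[OF good_sub2[OF Suc.prems that]] by blast
  have IH3: "LM (?F C (P(j := None)))" for j
    using Suc.IH[OF good_sub3[OF Suc.prems]] by blast
  have BC: "box (M j)" if "j \<in> C" for j using boxM good_C[OF Suc.prems that] by blast
  have BP: "box (M j)" if "j \<in> dom P" for j using boxM good_P[OF Suc.prems that] by blast
  have step: "Max (opts ?F C P z1) \<le> Max (opts ?F C P z2) + d"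
    if zz: "z1 \<le> z2 + d" and
       h1: "\<And>j. j \<in> C \<Longrightarrow> (\<integral>\<omega>. ?F (C - {j}) P (max z1 (fst \<omega>)) \<partial>M j) \<le> (\<integral>\<omega>. ?F (C - {j}) P (max z2 (fst \<omega>)) \<partial>M j) + d"
       and h2: "\<And>j t. j \<in> C \<Longrightarrow> ?F (C - {j}) (P(j \<mapsto> t)) z1 \<le> ?F (C - {j}) (P(j \<mapsto> t)) z2 + d"
       and h3: "\<And>j. j \<in> dom P \<Longrightarrow> condE (M j) (the (P j)) (\<lambda>v. ?F C (P(j := None)) (max z1 v))
                  \<le> condE (M j) (the (P j)) (\<lambda>v. ?F C (P(j := None)) (max z2 v)) + d"
    for z1 z2 d
    unfolding opts_def
  proof (rule Max_opts_le[OF fin])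
    show "z1 \<le> z2 + d" by fact
  next
    fix j assume j: "j \<in> C"
    show "- cF j + (\<integral>\<omega>. ?F (C - {j}) P (max z1 (fst \<omega>)) \<partial>M j) \<le> - cF j + (\<integral>\<omega>. ?F (C - {j}) P (max z2 (fst \<omega>)) \<partial>M j) + d"
      using h1[OF j] by simp
    have "(\<integral>\<omega>. ?F (C - {j}) (P(j \<mapsto> snd \<omega>)) z1 \<partial>M j) \<le> (\<integral>\<omega>. ?F (C - {j}) (P(j \<mapsto> snd \<omega>)) z2 \<partial>M j) + d"
      using box.int_snd_le[OF BC[OF j], of "\<lambda>t. ?F (C - {j}) (P(j \<mapsto> t)) z1" "\<lambda>t. ?F (C - {j}) (P(j \<mapsto> t)) z2" d]
        h2[OF j] by simp
    then show "- cP j + (\<integral>\<omega>. ?F (C - {j}) (P(j \<mapsto> snd \<omega>)) z1 \<partial>M j) \<le> - cP j + (\<integral>\<omega>. ?F (C - {j}) (P(j \<mapsto> snd \<omega>)) z2 \<partial>M j) + d"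
      by simp
  next
    fix j assume j: "j \<in> dom P"
    show "- cF j + condE (M j) (the (P j)) (\<lambda>v. ?F C (P(j := None)) (max z1 v))
        \<le> - cF j + condE (M j) (the (P j)) (\<lambda>v. ?F C (P(j := None)) (max z2 v)) + d"
      using h3[OF j] by simp
  qed
  have mono: "WW (Suc n) C P z \<le> WW (Suc n) C P z'" if zz: "z \<le> z'" for z z'
  proof -
    have "Max (opts ?F C P z) \<le> Max (opts ?F C P z') + 0"
    proof (rule step)
      show "z \<le> z' + 0" using zz by simp
      show "(\<integral>\<omega>. ?F (C - {j}) P (max z (fst \<omega>)) \<partial>M j) \<le> (\<integral>\<omega>. ?F (C - {j}) P (max z' (fst \<omega>)) \<partial>M j) + 0"
        if "j \<in> C" for j using box.int_LM_mono[OF BC[OF that] IH1[OF that] zz] by simp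
      show "?F (C - {j}) (P(j \<mapsto> t)) z \<le> ?F (C - {j}) (P(j \<mapsto> t)) z' + 0"
        if "j \<in> C" for j t using LM_mono[OF IH2[OF that] zz] by simp
      show "condE (M j) (the (P j)) (\<lambda>v. ?F C (P(j := None)) (max z v))
                  \<le> condE (M j) (the (P j)) (\<lambda>v. ?F C (P(j := None)) (max z' v)) + 0"
        if "j \<in> dom P" for j using box.condE_LM_mono[OF BP[OF that] IH3 zz] by simp
    qed
    then show ?thesis unfolding W_Suc by simp
  qed
  have lip: "WW (Suc n) C P z' \<le> WW (Suc n) C P z + (z' - z)" if zz: "z \<le> z'" for z z'
  proof -
    have "Max (opts ?F C P z') \<le> Max (opts ?F C P z) + (z' - z)"
    proof (rule step)
      show "z' \<le> z + (z' - z)" by simp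
      show "(\<integral>\<omega>. ?F (C - {j}) P (max z' (fst \<omega>)) \<partial>M j) \<le> (\<integral>\<omega>. ?F (C - {j}) P (max z (fst \<omega>)) \<partial>M j) + (z' - z)"
        if "j \<in> C" for j using box.int_LM_lip[OF BC[OF that] IH1[OF that] zz] by simp
      show "?F (C - {j}) (P(j \<mapsto> t)) z' \<le> ?F (C - {j}) (P(j \<mapsto> t)) z + (z' - z)"
        if "j \<in> C" for j t using LM_lip[OF IH2[OF that] zz] by simp
      show "condE (M j) (the (P j)) (\<lambda>v. ?F C (P(j := None)) (max z' v))
                  \<le> condE (M j) (the (P j)) (\<lambda>v. ?F C (P(j := None)) (max z v)) + (z' - z)"
        if "j \<in> dom P" for j using box.condE_LM_lip[OF BP[OF that] IH3 zz] by simp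
    qed
    then show ?thesis unfolding W_Suc by simp
  qed
  have above: "z \<le> WW (Suc n) C P z" for z
    unfolding W_Suc by (rule Max_ge) (auto simp: finite_opts fin opts_def)
  show ?case using mono lip above by (auto simp: LM_def mono_def)
qed

lemma V_LM: "good C P \<Longrightarrow> LM (V C P)"
  and V_above: "good C P \<Longrightarrow> z \<le> V C P z"
  using W_LM[of C P "2 * card C + card (dom P)"] unfolding optval_def[abs_def] by auto

lemma V_opts_le:
  assumes "good C P" "x \<in> opts V C P z"
  shows "x \<le> V C P z"
  using assms V_bellman[OF good_finite[OF assms(1)]] by (simp add: finite_opts good_finite)

lemma V_ge1: "good C P \<Longrightarrow> j \<in> C \<Longrightarrow> - cF j + (\<integral>\<omega>. V (C - {j}) P (max z (fst \<omega>)) \<partial>M j) \<le> V C P z"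
  by (rule V_opts_le) (auto simp: opts_def)

lemma V_ge2: "good C P \<Longrightarrow> j \<in> C \<Longrightarrow> - cP j + (\<integral>\<omega>. V (C - {j}) (P(j \<mapsto> snd \<omega>)) z \<partial>M j) \<le> V C P z"
  by (rule V_opts_le) (auto simp: opts_def)

lemma V_ge3: "good C P \<Longrightarrow> j \<in> dom P \<Longrightarrow>
   - cF j + condE (M j) (the (P j)) (\<lambda>v. V C (P(j := None)) (max z v)) \<le> V C P z"
  by (rule V_opts_le) (auto simp: opts_def)

lemma V_le:
  assumes g: "good C P" and "z \<le> R"
    and "\<And>j. j \<in> C \<Longrightarrow> - cF j + (\<integral>\<omega>. V (C - {j}) P (max z (fst \<omega>)) \<partial>M j) \<le> R"
    and "\<And>j. j \<in> C \<Longrightarrow> - cP j + (\<integral>\<omega>. V (C - {j}) (P(j \<mapsto> snd \<omega>)) z \<partial>M j) \<le> R"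
    and "\<And>j. j \<in> dom P \<Longrightarrow> - cF j + condE (M j) (the (P j)) (\<lambda>v. V C (P(j := None)) (max z v)) \<le> R"
  shows "V C P z \<le> R"
proof -
  have "Max (opts V C P z) \<le> R"
    using assms by (subst Max_le_iff) (auto simp: finite_opts good_finite opts_def)
  then show ?thesis using V_bellman[OF good_finite[OF g]] by simp
qed

end


lemma fub_condE:
  fixes A B :: "(real \<times> 't::finite) measure" and G :: "real \<Rightarrow> real"
  assumes A: "box A" and B: "box B" and G: "LM G"
  shows fc_int: "integrable A (\<lambda>a. condE B t (\<lambda>v. G (max (max z (fst a)) (min v \<sigma>))))"
   and fc_cintA: "box.cint A s (\<lambda>x. condE B t (\<lambda>v. G (max (max z x) (min v \<sigma>))))"
   and fc_cintB1: "box.cint B t (\<lambda>v. \<integral>a. G (max (max z (fst a)) (min v \<sigma>)) \<partial>A)"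
   and fc_cintB2: "box.cint B t (\<lambda>v. condE A s (\<lambda>x. G (max (max z x) (min v \<sigma>))))"
   and fc_swap1: "(\<integral>a. condE B t (\<lambda>v. G (max (max z (fst a)) (min v \<sigma>))) \<partial>A)
        = condE B t (\<lambda>v. \<integral>a. G (max (max z (fst a)) (min v \<sigma>)) \<partial>A)"
   and fc_swap2: "condE A s (\<lambda>x. condE B t (\<lambda>v. G (max (max z x) (min v \<sigma>))))
        = condE B t (\<lambda>v. condE A s (\<lambda>x. G (max (max z x) (min v \<sigma>))))"
proof -
  interpret A: box A by (rule A)
  interpret B: box B by (rule B)
  have Gm: "mono G" using G by (simp add: LM_def)
  have Gb: "\<And>x. \<bar>G x\<bar> \<le> \<bar>G 0\<bar> + \<bar>x\<bar>" by (rule LM_abs[OF G])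
  note F1 = fubini_box[OF A B Gm Gb A.w_one(1) A.w_one(2) A.w_one(3) B.w_ind(1)[of t] B.w_ind(2)[of t] B.w_ind(3)[of t], where z=z and s=\<sigma>]
  note F2 = fubini_box[OF A B Gm Gb A.w_ind(1)[of s] A.w_ind(2)[of s] A.w_ind(3)[of s] B.w_ind(1)[of t] B.w_ind(2)[of t] B.w_ind(3)[of t], where z=z and s=\<sigma>]
  have cB: "condE B t (\<lambda>v. G (max (max z x) (min v \<sigma>)))
      = (\<integral>b. G (max (max z x) (min (fst b) \<sigma>)) * indicator {\<omega>. snd \<omega> = t} b \<partial>B) / B.pr t" for x
    by (rule B.condE_alt)
  have cA: "condE A s (\<lambda>x. G (max (max z x) (min v \<sigma>)))
      = (\<integral>a. G (max (max z (fst a)) (min v \<sigma>)) * indicator {\<omega>. snd \<omega> = s} a \<partial>A) / A.pr s" for v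
    by (rule A.condE_alt)
  show "integrable A (\<lambda>a. condE B t (\<lambda>v. G (max (max z (fst a)) (min v \<sigma>))))"
    unfolding cB using integrable_divide[OF F1(1), of "B.pr t"] by simp
  show "A.cint s (\<lambda>x. condE B t (\<lambda>v. G (max (max z x) (min v \<sigma>))))"
    unfolding A.cint_def cB using integrable_divide[OF F2(1), of "B.pr t"] by simp
  show "B.cint t (\<lambda>v. \<integral>a. G (max (max z (fst a)) (min v \<sigma>)) \<partial>A)"
    unfolding B.cint_def using F1(2) by simp
  show "B.cint t (\<lambda>v. condE A s (\<lambda>x. G (max (max z x) (min v \<sigma>))))"
    unfolding B.cint_def cA using integrable_divide[OF F2(2), of "A.pr s"] by simp
  show "(\<integral>a. condE B t (\<lambda>v. G (max (max z (fst a)) (min v \<sigma>))) \<partial>A)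
        = condE B t (\<lambda>v. \<integral>a. G (max (max z (fst a)) (min v \<sigma>)) \<partial>A)"
    unfolding cB B.condE_alt using F1(3) by simp
  show "condE A s (\<lambda>x. condE B t (\<lambda>v. G (max (max z x) (min v \<sigma>))))
        = condE B t (\<lambda>v. condE A s (\<lambda>x. G (max (max z x) (min v \<sigma>))))"
    unfolding cB cA A.condE_alt B.condE_alt using F2(3) by simp
qed


context box
begin

lemma cint_add: "cint t f1 \<Longrightarrow> cint t f2 \<Longrightarrow> cint t (\<lambda>x. f1 x + f2 x)"
  unfolding cint_def distrib_right by (rule Bochner_Integration.integrable_add)

lemma cint_mult_const: "cint t f \<Longrightarrow> cint t (\<lambda>x. f x * c)"
proof -
  assume "cint t f"
  then have "integrable A (\<lambda>\<omega>. c * (f (fst \<omega>) * indicator {\<omega>. snd \<omega> = t} \<omega>))"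
    unfolding cint_def by (rule integrable_mult_right)
  then show ?thesis unfolding cint_def by (simp add: mult_ac)
qed

lemma cint_sum: "finite I \<Longrightarrow> (\<And>i. i \<in> I \<Longrightarrow> cint t (F i)) \<Longrightarrow> cint t (\<lambda>x. \<Sum>i\<in>I. F i x)"
proof (induction I rule: finite_induct)
  case empty
  then show ?case using cint_const[of t 0] by simp
next
  case (insert i I)
  then show ?case by (simp add: cint_add)
qed

lemma cint_max0: "cint t (\<lambda>v. max 0 (v - s))"
proof (rule cint_I, rule int_fun_bound[where c="\<bar>s\<bar>"])
  show "(\<lambda>v. max 0 (v - s)) \<in> borel_measurable borel" by measurable
  show "\<bar>max 0 (x - s)\<bar> \<le> \<bar>s\<bar> + \<bar>x\<bar>" for x by (auto simp: max_def abs_if)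
qed

end

context pandora
begin

lemma U:
  assumes "good C P" "C \<inter> dom P = {}" "P k = Some t" "box.pr (M k) t > 0"
    "condE (M k) t (\<lambda>v. max 0 (v - \<sigma>)) = cF k"
  shows "V C P z \<le> condE (M k) t (\<lambda>v. V C (P(k := None)) (max z (min v \<sigma>)))"
  using assms
proof (induction "2 * card C + card (dom P)" arbitrary: C P z rule: less_induct)
  case less
  note g = less.prems(1) and disj = less.prems(2) and kP = less.prems(3) and p = less.prems(4)
    and sig = less.prems(5)
  have kdom: "k \<in> dom P" using kP by auto
  have kN: "k < N" using good_P[OF g kdom] .
  have Bbox: "box (M k)" using boxM kN by blast
  interpret B: box "M k" by (rule Bbox)
  have gP': "good C (P(k := None))" by (rule good_sub3[OF g])
  have LMP': "LM (V C (P(k := None)))" by (rule V_LM[OF gP'])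
  have fin: "finite C" "finite (dom P)" using good_finite[OF g] by auto
  let ?R = "condE (M k) t (\<lambda>v. V C (P(k := None)) (max z (min v \<sigma>)))"
  show ?case
  proof (rule V_le[OF g])
    have "condE (M k) t (\<lambda>_. z) \<le> ?R"
    proof (rule B.condE_mono[OF B.cint_const B.cint_LM2[OF LMP']])
      fix v
      have "z \<le> max z (min v \<sigma>)" by simp
      also have "\<dots> \<le> V C (P(k := None)) (max z (min v \<sigma>))" by (rule V_above[OF gP'])
      finally show "z \<le> V C (P(k := None)) (max z (min v \<sigma>))" .
    qed
    then show "z \<le> ?R" using B.condE_const[OF p] by simp
  next
    fix j assume j: "j \<in> C"
    have jk: "j \<noteq> k" using disj j kdom by auto
    have jN: "j < N" using good_C[OF g j] .
    have Abox: "box (M j)" using boxM jN by blast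
    interpret A: box "M j" by (rule Abox)
    have gj: "good (C - {j}) P" by (rule good_sub1[OF g])
    have gj': "good (C - {j}) (P(k := None))" by (rule good_sub1[OF gP'])
    have LMG: "LM (V (C - {j}) (P(k := None)))" by (rule V_LM[OF gj'])
    have IH1: "V (C - {j}) P x \<le> condE (M k) t (\<lambda>v. V (C - {j}) (P(k := None)) (max x (min v \<sigma>)))" for x
    proof (rule less.hyps)
      have "card (C - {j}) = card C - 1" "card C \<ge> 1" using j fin by (auto simp: card_gt_0_iff Suc_le_eq)
      then show "2 * card (C - {j}) + card (dom P) < 2 * card C + card (dom P)" by arith
    qed (use gj disj kP p sig in auto)
    have "(\<integral>a. V (C - {j}) P (max z (fst a)) \<partial>M j)
        \<le> (\<integral>a. condE (M k) t (\<lambda>v. V (C - {j}) (P(k := None)) (max (max z (fst a)) (min v \<sigma>))) \<partial>M j)"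
      by (rule integral_mono[OF A.int_LM[OF V_LM[OF gj]] fc_int[OF Abox Bbox LMG]]) (rule IH1)
    also have "\<dots> = condE (M k) t (\<lambda>v. \<integral>a. V (C - {j}) (P(k := None)) (max (max z (fst a)) (min v \<sigma>)) \<partial>M j)"
      by (rule fc_swap1[OF Abox Bbox LMG])
    finally have 0: "- cF j + (\<integral>a. V (C - {j}) P (max z (fst a)) \<partial>M j)
        \<le> - cF j + condE (M k) t (\<lambda>v. \<integral>a. V (C - {j}) (P(k := None)) (max (max z (fst a)) (min v \<sigma>)) \<partial>M j)"
      by simp
    have eq: "condE (M k) t (\<lambda>v. (\<integral>a. V (C - {j}) (P(k := None)) (max (max z (fst a)) (min v \<sigma>)) \<partial>M j) + - cF j)
       = condE (M k) t (\<lambda>v. \<integral>a. V (C - {j}) (P(k := None)) (max (max z (fst a)) (min v \<sigma>)) \<partial>M j) + - cF j"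
      by (rule B.condE_add_const[OF p fc_cintB1[OF Abox Bbox LMG]])
    have 1: "- cF j + (\<integral>a. V (C - {j}) P (max z (fst a)) \<partial>M j)
        \<le> condE (M k) t (\<lambda>v. (\<integral>a. V (C - {j}) (P(k := None)) (max (max z (fst a)) (min v \<sigma>)) \<partial>M j) + - cF j)"
      unfolding eq using 0 by simp
    also have "\<dots> \<le> ?R"
    proof (rule B.condE_mono[OF B.cint_add[OF fc_cintB1[OF Abox Bbox LMG] B.cint_const] B.cint_LM2[OF LMP']])
      fix v
      have "(\<integral>a. V (C - {j}) (P(k := None)) (max (max z (fst a)) (min v \<sigma>)) \<partial>M j)
          = (\<integral>a. V (C - {j}) (P(k := None)) (max (max z (min v \<sigma>)) (fst a)) \<partial>M j)"
        by (simp add: max.assoc max.commute max.left_commute)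
      then show "(\<integral>a. V (C - {j}) (P(k := None)) (max (max z (fst a)) (min v \<sigma>)) \<partial>M j) + - cF j
          \<le> V C (P(k := None)) (max z (min v \<sigma>))"
        using V_ge1[OF gP' j, of "max z (min v \<sigma>)"] by simp
    qed
    finally show "- cF j + (\<integral>\<omega>. V (C - {j}) P (max z (fst \<omega>)) \<partial>M j) \<le> ?R" .
  next
    fix j assume j: "j \<in> C"
    have jk: "j \<noteq> k" using disj j kdom by auto
    have jN: "j < N" using good_C[OF g j] .
    have Abox: "box (M j)" using boxM jN by blast
    interpret A: box "M j" by (rule Abox)
    have jP: "j \<notin> dom P" using disj j by auto
    have IH2: "V (C - {j}) (P(j \<mapsto> s)) z \<le> condE (M k) t (\<lambda>v. V (C - {j}) ((P(k := None))(j \<mapsto> s)) (max z (min v \<sigma>)))" for s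
    proof -
      have "V (C - {j}) (P(j \<mapsto> s)) z \<le> condE (M k) t (\<lambda>v. V (C - {j}) ((P(j \<mapsto> s))(k := None)) (max z (min v \<sigma>)))"
      proof (rule less.hyps)
        have "card (C - {j}) = card C - 1" "card C \<ge> 1" using j fin by (auto simp: card_gt_0_iff Suc_le_eq)
        moreover have "card (dom (P(j \<mapsto> s))) = card (dom P) + 1" using jP fin by simp
        ultimately show "2 * card (C - {j}) + card (dom (P(j \<mapsto> s))) < 2 * card C + card (dom P)" by arith
        show "good (C - {j}) (P(j \<mapsto> s))" by (rule good_sub2[OF g j])
        show "(C - {j}) \<inter> dom (P(j \<mapsto> s)) = {}" using disj by auto
        show "(P(j \<mapsto> s)) k = Some t" using kP jk by simp
      qed (use p sig in auto)
      moreover have "(P(j \<mapsto> s))(k := None) = (P(k := None))(j \<mapsto> s)" using jk by (rule fun_upd_twist)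
      ultimately show ?thesis by simp
    qed
    have gs: "good (C - {j}) ((P(k := None))(j \<mapsto> s))" for s by (rule good_sub2[OF gP' j])
    have cs: "B.cint t (\<lambda>v. V (C - {j}) ((P(k := None))(j \<mapsto> s)) (max z (min v \<sigma>)) * A.pr s)" for s
      by (rule B.cint_mult_const[OF B.cint_LM2[OF V_LM[OF gs]]])
    have "(\<integral>\<omega>. V (C - {j}) (P(j \<mapsto> snd \<omega>)) z \<partial>M j) = (\<Sum>s\<in>UNIV. V (C - {j}) (P(j \<mapsto> s)) z * A.pr s)"
      by (rule A.integral_snd_sum)
    also have "\<dots> \<le> (\<Sum>s\<in>UNIV. condE (M k) t (\<lambda>v. V (C - {j}) ((P(k := None))(j \<mapsto> s)) (max z (min v \<sigma>))) * A.pr s)"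
      by (intro sum_mono mult_right_mono IH2 A.pr_nonneg)
    also have "\<dots> = (\<Sum>s\<in>UNIV. condE (M k) t (\<lambda>v. V (C - {j}) ((P(k := None))(j \<mapsto> s)) (max z (min v \<sigma>)) * A.pr s))"
      using B.condE_cmult by (simp add: mult.commute)
    also have "\<dots> = condE (M k) t (\<lambda>v. \<Sum>s\<in>UNIV. V (C - {j}) ((P(k := None))(j \<mapsto> s)) (max z (min v \<sigma>)) * A.pr s)"
      by (rule B.condE_sum[symmetric]) (auto intro: cs)
    finally have 0: "- cP j + (\<integral>\<omega>. V (C - {j}) (P(j \<mapsto> snd \<omega>)) z \<partial>M j)
       \<le> - cP j + condE (M k) t (\<lambda>v. \<Sum>s\<in>UNIV. V (C - {j}) ((P(k := None))(j \<mapsto> s)) (max z (min v \<sigma>)) * A.pr s)"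
      by simp
    have csum: "B.cint t (\<lambda>v. \<Sum>s\<in>UNIV. V (C - {j}) ((P(k := None))(j \<mapsto> s)) (max z (min v \<sigma>)) * A.pr s)"
      by (rule B.cint_sum) (auto intro: cs)
    have eq: "condE (M k) t (\<lambda>v. (\<Sum>s\<in>UNIV. V (C - {j}) ((P(k := None))(j \<mapsto> s)) (max z (min v \<sigma>)) * A.pr s) + - cP j)
       = condE (M k) t (\<lambda>v. \<Sum>s\<in>UNIV. V (C - {j}) ((P(k := None))(j \<mapsto> s)) (max z (min v \<sigma>)) * A.pr s) + - cP j"
      by (rule B.condE_add_const[OF p csum])
    have 1: "- cP j + (\<integral>\<omega>. V (C - {j}) (P(j \<mapsto> snd \<omega>)) z \<partial>M j)
       \<le> condE (M k) t (\<lambda>v. (\<Sum>s\<in>UNIV. V (C - {j}) ((P(k := None))(j \<mapsto> s)) (max z (min v \<sigma>)) * A.pr s) + - cP j)"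
      unfolding eq using 0 by simp
    also have "\<dots> \<le> ?R"
    proof (rule B.condE_mono[OF B.cint_add[OF csum B.cint_const] B.cint_LM2[OF LMP']])
      fix v
      have "(\<Sum>s\<in>UNIV. V (C - {j}) ((P(k := None))(j \<mapsto> s)) (max z (min v \<sigma>)) * A.pr s)
          = (\<integral>\<omega>. V (C - {j}) ((P(k := None))(j \<mapsto> snd \<omega>)) (max z (min v \<sigma>)) \<partial>M j)"
        by (rule A.integral_snd_sum[symmetric])
      then show "(\<Sum>s\<in>UNIV. V (C - {j}) ((P(k := None))(j \<mapsto> s)) (max z (min v \<sigma>)) * A.pr s) + - cP j
          \<le> V C (P(k := None)) (max z (min v \<sigma>))"
        using V_ge2[OF gP' j, of "max z (min v \<sigma>)"] by simp
    qed
    finally show "- cP j + (\<integral>\<omega>. V (C - {j}) (P(j \<mapsto> snd \<omega>)) z \<partial>M j) \<le> ?R" .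
  next
    fix j assume j: "j \<in> dom P"
    show "- cF j + condE (M j) (the (P j)) (\<lambda>v. V C (P(j := None)) (max z v)) \<le> ?R"
    proof (cases "j = k")
      case True
      have tk: "the (P j) = t" using True kP by simp
      have "condE (M k) t (\<lambda>v. V C (P(k := None)) (max z v))
          \<le> condE (M k) t (\<lambda>v. V C (P(k := None)) (max z (min v \<sigma>)) + max 0 (v - \<sigma>))"
      proof (rule B.condE_mono[OF B.cint_LM[OF LMP'] B.cint_add[OF B.cint_LM2[OF LMP'] B.cint_max0]])
        fix v
        have le: "max z (min v \<sigma>) \<le> max z v" by (simp add: max_def min_def)
        have "V C (P(k := None)) (max z v) \<le> V C (P(k := None)) (max z (min v \<sigma>)) + (max z v - max z (min v \<sigma>))"
          by (rule LM_lip[OF LMP' le])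
        moreover have "max z v - max z (min v \<sigma>) \<le> max 0 (v - \<sigma>)" by (simp add: max_def min_def)
        ultimately show "V C (P(k := None)) (max z v) \<le> V C (P(k := None)) (max z (min v \<sigma>)) + max 0 (v - \<sigma>)"
          by simp
      qed
      also have "\<dots> = ?R + cF k"
        using B.condE_add[OF B.cint_LM2[OF LMP'] B.cint_max0] sig by simp
      finally show ?thesis using True tk by simp
    next
      case False
      have jk: "j \<noteq> k" by fact
      have jN: "j < N" using good_P[OF g j] .
      have Abox: "box (M j)" using boxM jN by blast
      interpret A: box "M j" by (rule Abox)
      define s where "s = the (P j)"
      have g3: "good C ((P(k := None))(j := None))" by (rule good_sub3[OF gP'])
      have LMG: "LM (V C ((P(k := None))(j := None)))" by (rule V_LM[OF g3])
      have IH3: "V C (P(j := None)) x \<le> condE (M k) t (\<lambda>v. V C ((P(k := None))(j := None)) (max x (min v \<sigma>)))" for x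
      proof -
        have "V C (P(j := None)) x \<le> condE (M k) t (\<lambda>v. V C ((P(j := None))(k := None)) (max x (min v \<sigma>)))"
        proof (rule less.hyps)
          have "card (dom (P(j := None))) = card (dom P) - 1" "card (dom P) \<ge> 1"
            using j fin by (auto simp: card_gt_0_iff Suc_le_eq)
          then show "2 * card C + card (dom (P(j := None))) < 2 * card C + card (dom P)" by arith
          show "good C (P(j := None))" by (rule good_sub3[OF g])
          show "C \<inter> dom (P(j := None)) = {}" using disj by auto
          show "(P(j := None)) k = Some t" using kP jk by simp
        qed (use p sig in auto)
        moreover have "(P(j := None))(k := None) = (P(k := None))(j := None)" using jk by (rule fun_upd_twist)
        ultimately show ?thesis by simp
      qed
      have "condE (M j) s (\<lambda>x. V C (P(j := None)) (max z x))
          \<le> condE (M j) s (\<lambda>x. condE (M k) t (\<lambda>v. V C ((P(k := None))(j := None)) (max (max z x) (min v \<sigma>))))"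
        by (rule A.condE_mono[OF A.cint_LM[OF V_LM[OF good_sub3[OF g]]] fc_cintA[OF Abox Bbox LMG]]) (rule IH3)
      also have "\<dots> = condE (M k) t (\<lambda>v. condE (M j) s (\<lambda>x. V C ((P(k := None))(j := None)) (max (max z x) (min v \<sigma>))))"
        by (rule fc_swap2[OF Abox Bbox LMG])
      finally have 0: "- cF j + condE (M j) s (\<lambda>x. V C (P(j := None)) (max z x))
          \<le> - cF j + condE (M k) t (\<lambda>v. condE (M j) s (\<lambda>x. V C ((P(k := None))(j := None)) (max (max z x) (min v \<sigma>))))"
        by simp
      have eq: "condE (M k) t (\<lambda>v. condE (M j) s (\<lambda>x. V C ((P(k := None))(j := None)) (max (max z x) (min v \<sigma>))) + - cF j)
         = condE (M k) t (\<lambda>v. condE (M j) s (\<lambda>x. V C ((P(k := None))(j := None)) (max (max z x) (min v \<sigma>)))) + - cF j"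
        by (rule B.condE_add_const[OF p fc_cintB2[OF Abox Bbox LMG]])
      have 1: "- cF j + condE (M j) s (\<lambda>x. V C (P(j := None)) (max z x))
          \<le> condE (M k) t (\<lambda>v. condE (M j) s (\<lambda>x. V C ((P(k := None))(j := None)) (max (max z x) (min v \<sigma>))) + - cF j)"
        unfolding eq using 0 by simp
      also have "\<dots> \<le> ?R"
      proof (rule B.condE_mono[OF B.cint_add[OF fc_cintB2[OF Abox Bbox LMG] B.cint_const] B.cint_LM2[OF LMP']])
        fix v
        have jP': "j \<in> dom (P(k := None))" using j jk by auto
        have sP': "the ((P(k := None)) j) = s" using jk by (simp add: s_def)
        have "condE (M j) s (\<lambda>x. V C ((P(k := None))(j := None)) (max (max z x) (min v \<sigma>)))
            = condE (M j) s (\<lambda>x. V C ((P(k := None))(j := None)) (max (max z (min v \<sigma>)) x))"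
          by (simp add: max.assoc max.commute max.left_commute)
        then show "condE (M j) s (\<lambda>x. V C ((P(k := None))(j := None)) (max (max z x) (min v \<sigma>))) + - cF j
            \<le> V C (P(k := None)) (max z (min v \<sigma>))"
          using V_ge3[OF gP' jP', of "max z (min v \<sigma>)"] unfolding sP' by simp
      qed
      finally show ?thesis unfolding s_def .
    qed
  qed
qed

end


context box
begin

lemma condE_cong: "(\<And>v. f1 v = f2 v) \<Longrightarrow> condE A t f1 = condE A t f2"
  by (simp add: condE_alt)

lemma condE_max: "pr t > 0 \<Longrightarrow> condE A t (\<lambda>v. max z v) = z + g t z"
proof -
  assume p: "pr t > 0"
  have "condE A t (\<lambda>v. max z v) = condE A t (\<lambda>v. max 0 (v - z) + z)"
    by (rule condE_cong) (simp add: max_def)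
  also have "\<dots> = g t z + z" unfolding g_def by (rule condE_add_const[OF p cint_max0])
  finally show ?thesis by simp
qed

lemma condE_maxmin:
  assumes p: "pr t > 0" and sig: "condE A t (\<lambda>v. max 0 (v - s)) = c"
  shows "condE A t (\<lambda>v. max z (min v s)) = z + max 0 (- c + g t z)"
proof (cases "s \<le> z")
  case True
  have "condE A t (\<lambda>v. max z (min v s)) = condE A t (\<lambda>v. z)"
    by (rule condE_cong) (use True in \<open>simp add: max_def min_def\<close>)
  also have "\<dots> = z" by (rule condE_const[OF p])
  finally show ?thesis using g_anti[OF True, of t] sig by (simp add: g_def)
next
  case False
  have cm: "cint t (\<lambda>v. - 1 * max 0 (v - s))"
    using cint_mult_const[OF cint_max0, of t s "- 1"] by (simp add: mult.commute)
  have "condE A t (\<lambda>v. max z (min v s)) = condE A t (\<lambda>v. (max 0 (v - z) + - 1 * max 0 (v - s)) + z)"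
    by (rule condE_cong) (use False in \<open>auto simp: max_def min_def\<close>)
  also have "\<dots> = condE A t (\<lambda>v. max 0 (v - z) + - 1 * max 0 (v - s)) + z"
    by (rule condE_add_const[OF p cint_add[OF cint_max0 cm]])
  also have "condE A t (\<lambda>v. max 0 (v - z) + - 1 * max 0 (v - s)) = g t z - c"
    using condE_add[OF cint_max0 cm] condE_cmult[of t "- 1" "\<lambda>v. max 0 (v - s)"] sig by (simp add: g_def)
  finally have 1: "condE A t (\<lambda>v. max z (min v s)) = g t z - c + z" .
  have "g t s \<le> g t z" using False by (intro g_anti) simp
  then have "c \<le> g t z" using sig by (simp add: g_def)
  then show ?thesis using 1 by simp
qed

end

context pandora
begin

lemma L1:
  assumes "good C P" "C \<inter> dom P = {}"
    and "\<And>j. j \<in> dom P \<Longrightarrow> box.pr (M j) (the (P j)) > 0"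
    and "\<And>j. j \<in> C \<Longrightarrow> sigmaF (M j) (cF j) \<le> z"
    and "\<And>j. j \<in> C \<Longrightarrow> sigmaP (M j) (cF j) (cP j) \<le> z"
    and "\<And>j. j \<in> dom P \<Longrightarrow> sigmaFcond (M j) (cF j) (the (P j)) \<le> z"
  shows "V C P z = z"
  using assms
proof (induction "2 * card C + card (dom P)" arbitrary: C P z rule: less_induct)
  case less
  note g = less.prems(1) and disj = less.prems(2) and pp = less.prems(3)
    and sF = less.prems(4) and sP = less.prems(5) and sFc = less.prems(6)
  have fin: "finite C" "finite (dom P)" using good_finite[OF g] by auto
  have "V C P z \<le> z"
  proof (rule V_le[OF g])
    show "z \<le> z" by simp
  next
    fix j assume j: "j \<in> C"
    have jN: "j < N" using good_C[OF g j] .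
    have Abox: "box (M j)" using boxM jN by blast
    interpret A: box "M j" by (rule Abox)
    have IH: "V (C - {j}) P x = x" if "z \<le> x" for x
    proof (rule less.hyps)
      have "card (C - {j}) = card C - 1" "card C \<ge> 1" using j fin by (auto simp: card_gt_0_iff Suc_le_eq)
      then show "2 * card (C - {j}) + card (dom P) < 2 * card C + card (dom P)" by arith
      show "good (C - {j}) P" by (rule good_sub1[OF g])
      show "(C - {j}) \<inter> dom P = {}" using disj by auto
      show "\<And>i. i \<in> dom P \<Longrightarrow> 0 < box.pr (M i) (the (P i))" by (rule pp)
      show "\<And>i. i \<in> C - {j} \<Longrightarrow> sigmaF (M i) (cF i) \<le> x"
      proof - fix i assume "i \<in> C - {j}" then show "sigmaF (M i) (cF i) \<le> x" using sF[of i] that by auto qed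
      show "\<And>i. i \<in> C - {j} \<Longrightarrow> sigmaP (M i) (cF i) (cP i) \<le> x"
      proof - fix i assume "i \<in> C - {j}" then show "sigmaP (M i) (cF i) (cP i) \<le> x" using sP[of i] that by auto qed
      show "\<And>i. i \<in> dom P \<Longrightarrow> sigmaFcond (M i) (cF i) (the (P i)) \<le> x"
      proof - fix i assume "i \<in> dom P" then show "sigmaFcond (M i) (cF i) (the (P i)) \<le> x" using sFc[of i] that by auto qed
    qed
    have "(\<integral>\<omega>. V (C - {j}) P (max z (fst \<omega>)) \<partial>M j) = (\<integral>\<omega>. max 0 (fst \<omega> - z) + z \<partial>M j)"
      by (rule Bochner_Integration.integral_cong[OF refl]) (simp add: IH max_def)
    also have "\<dots> = (\<integral>\<omega>. max 0 (fst \<omega> - z) \<partial>M j) + z"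
      using A.num_int[OF A.w_one, of z] by (simp add: A.prob_space)
    also have "(\<integral>\<omega>. max 0 (fst \<omega> - z) \<partial>M j) \<le> (\<integral>\<omega>. max 0 (fst \<omega> - sigmaF (M j) (cF j)) \<partial>M j)"
      using A.num_anti[OF A.w_one sF[OF j]] by (simp add: A.num_def)
    also have "\<dots> = cF j" by (rule A.sigmaF_eq[OF cF_pos[OF jN]])
    finally show "- cF j + (\<integral>\<omega>. V (C - {j}) P (max z (fst \<omega>)) \<partial>M j) \<le> z" by simp
  next
    fix j assume j: "j \<in> C"
    have jN: "j < N" using good_C[OF g j] .
    have Abox: "box (M j)" using boxM jN by blast
    interpret A: box "M j" by (rule Abox)
    have jP: "j \<notin> dom P" using disj j by auto
    have IH: "V (C - {j}) P x = x" if "z \<le> x" for x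
    proof (rule less.hyps)
      have "card (C - {j}) = card C - 1" "card C \<ge> 1" using j fin by (auto simp: card_gt_0_iff Suc_le_eq)
      then show "2 * card (C - {j}) + card (dom P) < 2 * card C + card (dom P)" by arith
      show "good (C - {j}) P" by (rule good_sub1[OF g])
      show "(C - {j}) \<inter> dom P = {}" using disj by auto
      show "\<And>i. i \<in> dom P \<Longrightarrow> 0 < box.pr (M i) (the (P i))" by (rule pp)
      show "\<And>i. i \<in> C - {j} \<Longrightarrow> sigmaF (M i) (cF i) \<le> x"
      proof - fix i assume "i \<in> C - {j}" then show "sigmaF (M i) (cF i) \<le> x" using sF[of i] that by auto qed
      show "\<And>i. i \<in> C - {j} \<Longrightarrow> sigmaP (M i) (cF i) (cP i) \<le> x"
      proof - fix i assume "i \<in> C - {j}" then show "sigmaP (M i) (cF i) (cP i) \<le> x" using sP[of i] that by auto qed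
      show "\<And>i. i \<in> dom P \<Longrightarrow> sigmaFcond (M i) (cF i) (the (P i)) \<le> x"
      proof - fix i assume "i \<in> dom P" then show "sigmaFcond (M i) (cF i) (the (P i)) \<le> x" using sFc[of i] that by auto qed
    qed
    have trm: "V (C - {j}) (P(j \<mapsto> s)) z * A.pr s \<le> (z + max 0 (- cF j + A.g s z)) * A.pr s" for s
    proof (cases "A.pr s = 0")
      case True then show ?thesis by simp
    next
      case False
      then have p: "A.pr s > 0" using A.pr_nonneg[of s] by simp
      define \<sigma> where "\<sigma> = sigmaFcond (M j) (cF j) s"
      have sig: "condE (M j) s (\<lambda>v. max 0 (v - \<sigma>)) = cF j"
        unfolding \<sigma>_def by (rule A.sigmaFcond_eq[OF cF_pos[OF jN] p])
      have "V (C - {j}) (P(j \<mapsto> s)) z \<le> condE (M j) s (\<lambda>v. V (C - {j}) ((P(j \<mapsto> s))(j := None)) (max z (min v \<sigma>)))"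
      proof (rule U)
        show "good (C - {j}) (P(j \<mapsto> s))" by (rule good_sub2[OF g j])
        show "(C - {j}) \<inter> dom (P(j \<mapsto> s)) = {}" using disj by auto
      qed (use p sig in auto)
      also have "(P(j \<mapsto> s))(j := None) = P" using jP by (auto simp: fun_eq_iff)
      also have "condE (M j) s (\<lambda>v. V (C - {j}) P (max z (min v \<sigma>))) = condE (M j) s (\<lambda>v. max z (min v \<sigma>))"
        by (rule A.condE_cong) (simp add: IH)
      also have "\<dots> = z + max 0 (- cF j + A.g s z)" by (rule A.condE_maxmin[OF p sig])
      finally show ?thesis by (rule mult_right_mono[OF _ A.pr_nonneg])
    qed
    have "(\<integral>\<omega>. V (C - {j}) (P(j \<mapsto> snd \<omega>)) z \<partial>M j) = (\<Sum>s\<in>UNIV. V (C - {j}) (P(j \<mapsto> s)) z * A.pr s)"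
      by (rule A.integral_snd_sum)
    also have "\<dots> \<le> (\<Sum>s\<in>UNIV. (z + max 0 (- cF j + A.g s z)) * A.pr s)"
      by (rule sum_mono) (rule trm)
    also have "\<dots> = z + (\<Sum>s\<in>UNIV. max 0 (- cF j + A.g s z) * A.pr s)"
      by (simp add: distrib_right sum.distrib sum_distrib_left[symmetric] A.sum_pr)
    also have "(\<Sum>s\<in>UNIV. max 0 (- cF j + A.g s z) * A.pr s)
       = (\<integral>\<omega>. max 0 (- cF j + condE (M j) (snd \<omega>) (\<lambda>v. max 0 (v - z))) \<partial>M j)"
      by (rule A.h_sum[symmetric])
    also have "\<dots> \<le> (\<integral>\<omega>. max 0 (- cF j + condE (M j) (snd \<omega>) (\<lambda>v. max 0 (v - sigmaP (M j) (cF j) (cP j)))) \<partial>M j)"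
      by (rule A.h_anti[OF sP[OF j]])
    also have "\<dots> = cP j" by (rule A.sigmaP_eq[OF cF_pos[OF jN] cP_pos[OF jN]])
    finally show "- cP j + (\<integral>\<omega>. V (C - {j}) (P(j \<mapsto> snd \<omega>)) z \<partial>M j) \<le> z" by linarith
  next
    fix j assume j: "j \<in> dom P"
    have jN: "j < N" using good_P[OF g j] .
    have Abox: "box (M j)" using boxM jN by blast
    interpret A: box "M j" by (rule Abox)
    define s where "s = the (P j)"
    have p: "A.pr s > 0" unfolding s_def by (rule pp[OF j])
    have IH: "V C (P(j := None)) x = x" if "z \<le> x" for x
    proof (rule less.hyps)
      have "card (dom (P(j := None))) = card (dom P) - 1" "card (dom P) \<ge> 1"
        using j fin by (auto simp: card_gt_0_iff Suc_le_eq)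
      then show "2 * card C + card (dom (P(j := None))) < 2 * card C + card (dom P)" by arith
      show "good C (P(j := None))" by (rule good_sub3[OF g])
      show "C \<inter> dom (P(j := None)) = {}" using disj by auto
      show "\<And>i. i \<in> dom (P(j := None)) \<Longrightarrow> 0 < box.pr (M i) (the ((P(j := None)) i))"
      proof - fix i assume "i \<in> dom (P(j := None))" then show "0 < box.pr (M i) (the ((P(j := None)) i))"
          using pp[of i] by (auto split: if_splits) qed
      show "\<And>i. i \<in> C \<Longrightarrow> sigmaF (M i) (cF i) \<le> x"
      proof - fix i assume "i \<in> C" then show "sigmaF (M i) (cF i) \<le> x" using sF[of i] that by auto qed
      show "\<And>i. i \<in> C \<Longrightarrow> sigmaP (M i) (cF i) (cP i) \<le> x"
      proof - fix i assume "i \<in> C" then show "sigmaP (M i) (cF i) (cP i) \<le> x" using sP[of i] that by auto qed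
      show "\<And>i. i \<in> dom (P(j := None)) \<Longrightarrow> sigmaFcond (M i) (cF i) (the ((P(j := None)) i)) \<le> x"
      proof - fix i assume "i \<in> dom (P(j := None))" then show "sigmaFcond (M i) (cF i) (the ((P(j := None)) i)) \<le> x"
          using sFc[of i] that by (auto split: if_splits) qed
    qed
    have "condE (M j) s (\<lambda>v. V C (P(j := None)) (max z v)) = condE (M j) s (\<lambda>v. max z v)"
      by (rule A.condE_cong) (simp add: IH)
    also have "\<dots> = z + A.g s z" by (rule A.condE_max[OF p])
    finally have e1: "condE (M j) s (\<lambda>v. V C (P(j := None)) (max z v)) = z + A.g s z" .
    have "A.g s z \<le> A.g s (sigmaFcond (M j) (cF j) s)" by (rule A.g_anti) (use sFc[OF j] in \<open>simp add: s_def\<close>)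
    also have "\<dots> = cF j" unfolding A.g_def by (rule A.sigmaFcond_eq[OF cF_pos[OF jN] p])
    finally have "A.g s z \<le> cF j" .
    with e1 have "condE (M j) s (\<lambda>v. V C (P(j := None)) (max z v)) \<le> z + cF j" by simp
    then show "- cF j + condE (M j) (the (P j)) (\<lambda>v. V C (P(j := None)) (max z v)) \<le> z"
      unfolding s_def by linarith
  qed
  then show ?case using V_above[OF g, of z] by simp
qed


lemma main_locale:
  assumes g: "good C P" and disj: "C \<inter> dom P = {}"
    and tp: "\<And>j t. P j = Some t \<Longrightarrow> 0 < measure (M j) {\<omega> \<in> space (M j). snd \<omega> = t}"
    and no_stop: "y < V C P y"
    and kP: "P k = Some tk"
    and kmax: "sigmaFcond (M k) (cF k) tk = max_threshold M cF cP C P"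
  shows "V C P y = QFpartial M cF cP C P y k"
proof -
  have kdom: "k \<in> dom P" using kP by auto
  have kN: "k < N" using good_P[OF g kdom] .
  have Bbox: "box (M k)" using boxM kN by blast
  interpret B: box "M k" by (rule Bbox)
  have p: "B.pr tk > 0" using tp[OF kP] by (simp add: B.pr_def)
  define \<sigma> where "\<sigma> = sigmaFcond (M k) (cF k) tk"
  have sig: "condE (M k) tk (\<lambda>v. max 0 (v - \<sigma>)) = cF k"
    unfolding \<sigma>_def by (rule B.sigmaFcond_eq[OF cF_pos[OF kN] p])
  have fin: "finite C" "finite (dom P)" using good_finite[OF g] by auto
  let ?T = "(\<lambda>j. sigmaF (M j) (cF j)) ` C \<union> (\<lambda>j. sigmaP (M j) (cF j) (cP j)) ` C
      \<union> (\<lambda>j. sigmaFcond (M j) (cF j) (the (P j))) ` dom P"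
  have finT: "finite ?T" using fin by simp
  have Tle: "x \<le> \<sigma>" if "x \<in> ?T" for x
    using Max_ge[OF finT that] kmax unfolding \<sigma>_def max_threshold_def by simp
  have gP': "good C (P(k := None))" by (rule good_sub3[OF g])
  have disj': "C \<inter> dom (P(k := None)) = {}" using disj by auto
  have LMP': "LM (V C (P(k := None)))" by (rule V_LM[OF gP'])
  have L1': "V C (P(k := None)) z = z" if z: "\<sigma> \<le> z" for z
  proof (rule L1[OF gP' disj'])
    fix j assume "j \<in> dom (P(k := None))"
    then have j: "j \<in> dom P" "j \<noteq> k" by (auto split: if_splits)
    then obtain u where u: "P j = Some u" by auto
    have "box (M j)" using boxM good_P[OF g j(1)] by blast
    then show "0 < box.pr (M j) (the ((P(k := None)) j))"
      using tp[OF u] j(2) u by (simp add: box.pr_def)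
    show "sigmaFcond (M j) (cF j) (the ((P(k := None)) j)) \<le> z"
      using Tle[of "sigmaFcond (M j) (cF j) (the (P j))"] j z by auto
  next
    fix j assume j: "j \<in> C"
    show "sigmaF (M j) (cF j) \<le> z" using Tle[of "sigmaF (M j) (cF j)"] j z by auto
    show "sigmaP (M j) (cF j) (cP j) \<le> z" using Tle[of "sigmaP (M j) (cF j) (cP j)"] j z by auto
  qed
  let ?R = "condE (M k) tk (\<lambda>v. V C (P(k := None)) (max y (min v \<sigma>)))"
  have UU: "V C P y \<le> ?R" by (rule U[OF g disj kP p sig])
  have yl: "y < \<sigma>"
  proof (rule ccontr)
    assume "\<not> y < \<sigma>"
    then have sy: "\<sigma> \<le> y" by simp
    have "?R = condE (M k) tk (\<lambda>v. y)"
      by (rule B.condE_cong) (use sy L1' in \<open>simp add: max_def min_def\<close>)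
    also have "\<dots> = y" by (rule B.condE_const[OF p])
    finally show False using UU no_stop by simp
  qed
  have eqpt: "V C (P(k := None)) (max y v) = V C (P(k := None)) (max y (min v \<sigma>)) + max 0 (v - \<sigma>)" for v
  proof (cases "v \<le> \<sigma>")
    case True then show ?thesis by (simp add: min_def)
  next
    case False
    then have "max y v = v" "max y (min v \<sigma>) = \<sigma>" using yl by (auto simp: max_def min_def)
    then show ?thesis using L1'[of v] L1'[of \<sigma>] False by simp
  qed
  have "QFpartial M cF cP C P y k = - cF k + condE (M k) tk (\<lambda>v. V C (P(k := None)) (max y v))"
    using kP by (simp add: QFpartial_def)
  also have "condE (M k) tk (\<lambda>v. V C (P(k := None)) (max y v))
      = condE (M k) tk (\<lambda>v. V C (P(k := None)) (max y (min v \<sigma>)) + max 0 (v - \<sigma>))"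
    by (rule B.condE_cong) (rule eqpt)
  also have "\<dots> = ?R + cF k"
    using B.condE_add[OF B.cint_LM2[OF LMP'] B.cint_max0] sig by simp
  finally have Q: "QFpartial M cF cP C P y k = ?R" by simp
  have "QFpartial M cF cP C P y k \<le> V C P y"
    using V_ge3[OF g kdom, of y] kP by (simp add: QFpartial_def)
  then show ?thesis using UU Q by simp
qed

end

theorem mainTheorem1:
  fixes N :: nat
    and M :: "nat \<Rightarrow> (real \<times> 't::finite) measure"
    and cF cP :: "nat \<Rightarrow> real"
    and C :: "nat set" and P :: "nat \<rightharpoonup> 't" and y :: real and k :: nat
  assumes boxes: "\<And>i. i < N \<Longrightarrow> prob_space (M i)"
    and sets_M: "\<And>i. i < N \<Longrightarrow> sets (M i) = sets (borel \<Otimes>\<^sub>M count_space UNIV)"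
    and integrable_V: "\<And>i. i < N \<Longrightarrow> integrable (M i) fst"
    and nonneg_V: "\<And>i. i < N \<Longrightarrow> (AE \<omega> in M i. 0 \<le> fst \<omega>)"
    and cF_pos: "\<And>i. i < N \<Longrightarrow> 0 < cF i"
    and cP_pos: "\<And>i. i < N \<Longrightarrow> 0 < cP i"
    and C_sub: "C \<subseteq> {..<N}"
    and P_sub: "dom P \<subseteq> {..<N}"
    and disj: "C \<inter> dom P = {}"
    and types_pos: "\<And>j t. P j = Some t \<Longrightarrow> 0 < measure (M j) {\<omega> \<in> space (M j). snd \<omega> = t}"
    and no_stop: "y < optval M cF cP C P y"
    and k_in: "P k = Some tk"
    and k_max: "sigmaFcond (M k) (cF k) tk = max_threshold M cF cP C P"
  shows "optval M cF cP C P y = QFpartial M cF cP C P y k"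
proof -
  interpret pandora N M cF cP
  proof (rule pandora.intro)
    fix i assume i: "i < N"
    show "box (M i)"
      by (rule box.intro[OF boxes[OF i]], rule box_axioms.intro[OF sets_M[OF i] integrable_V[OF i]])
    show "0 < cF i" by (rule cF_pos[OF i])
    show "0 < cP i" by (rule cP_pos[OF i])
  qed
  have g: "good C P" using C_sub P_sub by (simp add: good_def)
  show ?thesis by (rule main_locale[OF g disj types_pos no_stop k_in k_max])
qed


end
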